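(* Let $C=xe_0B_1e_1B_2\cdots B_ke_ky$ be a subcubic chain with chain-blocks $(\overline{B_i},\bar e_i)$, $i\in[k]$, and assume $\delta(\overline{B_i},\bar e_i)+\widehat\delta(\overline{B_i},\bar e_i)\le 0$ for all $i\in[k]$. Then $\delta(\overline C,e_C)+\widehat\delta(\overline C,e_C)\le 0$, with equality if and only if $\delta(\overline{B_i},\bar e_i)+\widehat\delta(\overline{B_i},\bar e_i)=0$ for all $i\in[k]$.
   Context: Graphs are finite and may have loops and parallel edges unless called simple; a loop contributes 2 to the degree of its vertex, and a graph is subcubic if every vertex has degree at most 3. $n(G)$ is the number of vertices of $G$ and $n_2(G)$ the number of vertices of degree 2. A cycle is a connected 2-regular subgraph (so a loop, or a pair of parallel edges, forms a cycle). An even cover of $G$ is a spanning subgraph $F$ in which every vertex has degree 0 or 2; its excess is $\mathrm{exc}(F)=2c(F)+i(F)$, where $c(F)$ is the number of cycles and $i(F)$ the number of isolated vertices of $F$. For $e\in E(G)$, let $\mathcal E(G,e)$ (resp. $\widehat{\mathcal E}(G,e)$) be the set of even covers of $G$ containing (resp. not containing) $e$, and define $\mathrm{exc}(G,e)=\min_{F\in\mathcal E(G,e)}\mathrm{exc}(F)-2$, $\widehat{\mathrm{exc}}(G,e)=\min_{F\in\widehat{\mathcal E}(G,e)}\mathrm{exc}(F)$, $\delta(G,e)=\mathrm{exc}(G,e)-\frac{n(G)+n_2(G)}4$, $\widehat\delta(G,e)=\widehat{\mathrm{exc}}(G,e)-\frac{n(G)+n_2(G)}4$. A subcubic chain is a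 simple connected subcubic graph $C$ written as an alternating sequence $C=x e_0 B_1 e_1 B_2\cdots B_k e_k y$ ($k\ge 0$) such that: $\{e_0,\dots,e_k\}$ is exactly the set of cut-edges of $C$; the connected components of $C-\{e_0,\dots,e_k\}$ are $B_0,B_1,\dots,B_{k+1}$ with $V(B_0)=\{x\}$, $V(B_{k+1})=\{y\}$; each $B_i$ ($1\le i\le k$) is a single vertex or 2-connected; and $e_i$ joins a vertex of $B_i$ to a vertex of $B_{i+1}$ ($0\le i\le k$). Its endpoints are $x,y$ and its end edges are $e_0,e_k$. It is trivial if $k=0$. If $k\ge1$, let $x_i$ (resp. $y_i$) be the endpoint of $e_{i-1}$ (resp. $e_i$) in $B_i$; the chain-blocks of $C$ are the pairs $(\overline{B_i},\bar e_i)$, $i\in[k]$, where $\overline{B_i}$ is $B_i$ plus a new edge $\bar e_i=x_iy_i$ (a loop if $B_i$ is a single vertex), and the closure of $C$ is $(\overline C,e_C)$ where $\overline C$ is obtained from $C-\{x,y\}$ by adding a new edge $e_C=x_1y_k$. If $C$ is trivial we set $\mathrm{exc}(\overline C,e_C)=\widehat{\mathrm{exc}}(\overline C,e_C)=\delta(\overline C,e_C)=\widehat\delta(\overline C,e_C)=0$. *)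

theory Defs
  imports Main "HOL-Library.Extended_Real"
begin

text \<open>A graph is given by a vertex set, an edge set and an endpoint map.
  An edge e with gends G e = (u,v) joins u and v (unordered); it is a loop iff u = v.\<close>

record ('v, 'e) mgraph =
  gverts :: "'v set"
  gedges :: "'e set"
  gends  :: "'e \<Rightarrow> 'v \<times> 'v"

definition wf_graph :: "('v,'e) mgraph \<Rightarrow> bool" where
  "wf_graph G \<longleftrightarrow> finite (gverts G) \<and> finite (gedges G) \<and>
     (\<forall>e\<in>gedges G. fst (gends G e) \<in> gverts G \<and> snd (gends G e) \<in> gverts G)"

text \<open>Degree of v in the spanning subgraph with edge set F; a loop counts twice.\<close>
definition deg_in :: "('v,'e) mgraph \<Rightarrow> 'e set \<Rightarrow> 'v \<Rightarrow> nat" where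
  "deg_in G F v = card {e\<in>F. fst (gends G e) = v} + card {e\<in>F. snd (gends G e) = v}"

definition degree :: "('v,'e) mgraph \<Rightarrow> 'v \<Rightarrow> nat" where
  "degree G v = deg_in G (gedges G) v"

definition subcubic :: "('v,'e) mgraph \<Rightarrow> bool" where
  "subcubic G \<longleftrightarrow> (\<forall>v\<in>gverts G. degree G v \<le> 3)"

definition simple_graph :: "('v,'e) mgraph \<Rightarrow> bool" where
  "simple_graph G \<longleftrightarrow>
     (\<forall>e\<in>gedges G. fst (gends G e) \<noteq> snd (gends G e)) \<and>
     (\<forall>e1\<in>gedges G. \<forall>e2\<in>gedges G.
        {fst (gends G e1), snd (gends G e1)} = {fst (gends G e2), snd (gends G e2)} \<longrightarrow> e1 = e2)"

definition n_verts :: "('v,'e) mgraph \<Rightarrow> nat" where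
  "n_verts G = card (gverts G)"

definition n_two :: "('v,'e) mgraph \<Rightarrow> nat" where
  "n_two G = card {v\<in>gverts G. degree G v = 2}"

definition reach :: "('v,'e) mgraph \<Rightarrow> 'e set \<Rightarrow> 'v \<Rightarrow> 'v \<Rightarrow> bool" where
  "reach G F u v \<longleftrightarrow>
     (\<lambda>a b. \<exists>e\<in>F \<inter> gedges G. gends G e = (a, b) \<or> gends G e = (b, a))\<^sup>*\<^sup>* u v"

definition components :: "('v,'e) mgraph \<Rightarrow> 'e set \<Rightarrow> 'v set set" where
  "components G F = {{v\<in>gverts G. reach G F u v} | u. u \<in> gverts G}"

definition connected_graph :: "('v,'e) mgraph \<Rightarrow> bool" where
  "connected_graph G \<longleftrightarrow> gverts G \<noteq> {} \<and>
     (\<forall>u\<in>gverts G. \<forall>v\<in>gverts G. reach G (gedges G) u v)"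

definition delete_vertex :: "('v,'e) mgraph \<Rightarrow> 'v \<Rightarrow> ('v,'e) mgraph" where
  "delete_vertex G v =
     \<lparr> gverts = gverts G - {v},
       gedges = {e\<in>gedges G. fst (gends G e) \<noteq> v \<and> snd (gends G e) \<noteq> v},
       gends = gends G \<rparr>"

text \<open>2-connected in the sense of Diestel: at least 3 vertices, connected,
  and connected after deleting any single vertex.\<close>
definition two_connected :: "('v,'e) mgraph \<Rightarrow> bool" where
  "two_connected G \<longleftrightarrow> card (gverts G) \<ge> 3 \<and> connected_graph G \<and>
     (\<forall>v\<in>gverts G. connected_graph (delete_vertex G v))"

definition cut_edge :: "('v,'e) mgraph \<Rightarrow> 'e \<Rightarrow> bool" where
  "cut_edge G e \<longleftrightarrow> e \<in> gedges G \<and>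
     \<not> reach G (gedges G - {e}) (fst (gends G e)) (snd (gends G e))"

definition even_cover :: "('v,'e) mgraph \<Rightarrow> 'e set \<Rightarrow> bool" where
  "even_cover G F \<longleftrightarrow> F \<subseteq> gedges G \<and> (\<forall>v\<in>gverts G. deg_in G F v \<in> {0, 2})"

text \<open>In an even cover every component containing an edge is a cycle, and
  every other component is an isolated vertex.\<close>
definition num_cycles :: "('v,'e) mgraph \<Rightarrow> 'e set \<Rightarrow> nat" where
  "num_cycles G F = card {K \<in> components G F. \<exists>e\<in>F. fst (gends G e) \<in> K}"

definition num_isolated :: "('v,'e) mgraph \<Rightarrow> 'e set \<Rightarrow> nat" where
  "num_isolated G F = card {v\<in>gverts G. deg_in G F v = 0}"

definition exc_cover :: "('v,'e) mgraph \<Rightarrow> 'e set \<Rightarrow> nat" where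
  "exc_cover G F = 2 * num_cycles G F + num_isolated G F"

text \<open>Minima over possibly empty sets are taken in the extended reals (min of empty = \<infinity>).\<close>
definition exc_with :: "('v,'e) mgraph \<Rightarrow> 'e \<Rightarrow> ereal" where
  "exc_with G e = (INF F \<in> {F. even_cover G F \<and> e \<in> F}. ereal (real (exc_cover G F))) - 2"

definition exc_without :: "('v,'e) mgraph \<Rightarrow> 'e \<Rightarrow> ereal" where
  "exc_without G e = (INF F \<in> {F. even_cover G F \<and> e \<notin> F}. ereal (real (exc_cover G F)))"

definition delta :: "('v,'e) mgraph \<Rightarrow> 'e \<Rightarrow> ereal" where
  "delta G e = exc_with G e - ereal ((real (n_verts G) + real (n_two G)) / 4)"

definition delta_hat :: "('v,'e) mgraph \<Rightarrow> 'e \<Rightarrow> ereal" where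
  "delta_hat G e = exc_without G e - ereal ((real (n_verts G) + real (n_two G)) / 4)"

text \<open>The chain C = x e_0 B_1 e_1 ... B_k e_k y is given by the graph C, the number k,
  the edges es 0, ..., es k, the vertex sets Bs 0, ..., Bs (k+1) of the blocks,
  and the vertices xs i (endpoint of e_(i-1) in B_i) and ys i (endpoint of e_i in B_i).
  The endpoints of the chain are x = ys 0 and y = xs (k+1).\<close>

definition block_graph ::
  "('v,'e) mgraph \<Rightarrow> nat \<Rightarrow> (nat \<Rightarrow> 'e) \<Rightarrow> (nat \<Rightarrow> 'v set) \<Rightarrow> nat \<Rightarrow> ('v,'e) mgraph" where
  "block_graph C k es Bs i =
     \<lparr> gverts = Bs i,
       gedges = {e \<in> gedges C - es ` {0..k}. fst (gends C e) \<in> Bs i \<and> snd (gends C e) \<in> Bs i},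
       gends = gends C \<rparr>"

definition subcubic_chain ::
  "('v,'e) mgraph \<Rightarrow> nat \<Rightarrow> (nat \<Rightarrow> 'e) \<Rightarrow> (nat \<Rightarrow> 'v set) \<Rightarrow> (nat \<Rightarrow> 'v) \<Rightarrow> (nat \<Rightarrow> 'v) \<Rightarrow> bool" where
  "subcubic_chain C k es Bs xs ys \<longleftrightarrow>
     wf_graph C \<and> simple_graph C \<and> connected_graph C \<and> subcubic C \<and>
     es ` {0..k} \<subseteq> gedges C \<and>
     {e\<in>gedges C. cut_edge C e} = es ` {0..k} \<and>
     components C (gedges C - es ` {0..k}) = Bs ` {0..k+1} \<and>
     inj_on Bs {0..k+1} \<and>
     Bs 0 = {ys 0} \<and> Bs (k+1) = {xs (k+1)} \<and>
     (\<forall>i\<in>{1..k}. card (Bs i) = 1 \<or> two_connected (block_graph C k es Bs i)) \<and>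
     (\<forall>i\<in>{0..k}. ys i \<in> Bs i \<and> xs (Suc i) \<in> Bs (Suc i) \<and>
        (gends C (es i) = (ys i, xs (Suc i)) \<or> gends C (es i) = (xs (Suc i), ys i)))"

text \<open>Chain-block (B_i bar, e_i bar): B_i plus a new edge None joining xs i and ys i
  (a loop if B_i is a single vertex). Old edges are tagged with Some.\<close>
definition chain_block ::
  "('v,'e) mgraph \<Rightarrow> nat \<Rightarrow> (nat \<Rightarrow> 'e) \<Rightarrow> (nat \<Rightarrow> 'v set) \<Rightarrow> (nat \<Rightarrow> 'v) \<Rightarrow> (nat \<Rightarrow> 'v)
     \<Rightarrow> nat \<Rightarrow> ('v, 'e option) mgraph" where
  "chain_block C k es Bs xs ys i =
     \<lparr> gverts = Bs i,
       gedges = insert None (Some ` gedges (block_graph C k es Bs i)),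
       gends = (\<lambda>f. case f of None \<Rightarrow> (xs i, ys i) | Some e \<Rightarrow> gends C e) \<rparr>"

text \<open>Closure (C bar, e_C): C - {x,y} plus a new edge None joining xs 1 and ys k.\<close>
definition chain_closure ::
  "('v,'e) mgraph \<Rightarrow> nat \<Rightarrow> (nat \<Rightarrow> 'v) \<Rightarrow> (nat \<Rightarrow> 'v) \<Rightarrow> ('v, 'e option) mgraph" where
  "chain_closure C k xs ys =
     \<lparr> gverts = gverts C - {ys 0, xs (k+1)},
       gedges = insert None (Some ` {e\<in>gedges C.
                   fst (gends C e) \<notin> {ys 0, xs (k+1)} \<and> snd (gends C e) \<notin> {ys 0, xs (k+1)}}),
       gends = (\<lambda>f. case f of None \<Rightarrow> (xs 1, ys k) | Some e \<Rightarrow> gends C e) \<rparr>"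

text \<open>delta + delta_hat of the closure, with the convention that it is 0 for a trivial chain.\<close>
definition closure_sum ::
  "('v,'e) mgraph \<Rightarrow> nat \<Rightarrow> (nat \<Rightarrow> 'v) \<Rightarrow> (nat \<Rightarrow> 'v) \<Rightarrow> ereal" where
  "closure_sum C k xs ys =
     (if k = 0 then 0
      else delta (chain_closure C k xs ys) None + delta_hat (chain_closure C k xs ys) None)"

end

theory Submission
  imports Defs
begin


definition inc :: "('v,'e) mgraph \<Rightarrow> 'e \<Rightarrow> 'v \<Rightarrow> nat" where
  "inc G f v = (if fst (gends G f) = v then 1 else 0) + (if snd (gends G f) = v then 1 else 0)"

lemma card_filter_sum: "finite A \<Longrightarrow> card {x\<in>A. P x} = (\<Sum>x\<in>A. if P x then 1 else 0)"
proof -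
  assume A: "finite A"
  have "card {x\<in>A. P x} = (\<Sum>x\<in>{x\<in>A. P x}. 1)" by (rule card_eq_sum)
  also have "\<dots> = (\<Sum>x\<in>A. if P x then 1 else 0)" using A by (rule sum.inter_filter)
  finally show ?thesis .
qed

lemma deg_in_sum: "finite F \<Longrightarrow> deg_in G F v = (\<Sum>f\<in>F. inc G f v)"
  unfolding deg_in_def inc_def by (simp add: card_filter_sum sum.distrib)

lemma reach_sym: "reach G F u v \<Longrightarrow> reach G F v u"
proof -
  have "symp (\<lambda>a b. \<exists>e\<in>F \<inter> gedges G. gends G e = (a, b) \<or> gends G e = (b, a))"
    by (auto simp: symp_def)
  then show "reach G F u v \<Longrightarrow> reach G F v u"
    unfolding reach_def by (rule sympD[OF symp_rtranclp])
qed

lemma reach_trans: "reach G F u v \<Longrightarrow> reach G F v w \<Longrightarrow> reach G F u w"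
  unfolding reach_def by (rule rtranclp_trans)

lemma reach_refl[simp]: "reach G F u u"
  unfolding reach_def by simp

lemma reach_edge: "e \<in> F \<Longrightarrow> e \<in> gedges G \<Longrightarrow> reach G F (fst (gends G e)) (snd (gends G e))"
  unfolding reach_def by (rule r_into_rtranclp) (auto intro!: bexI[of _ e])

lemma reach_edge': "e \<in> F \<Longrightarrow> e \<in> gedges G \<Longrightarrow> gends G e = (a,b) \<Longrightarrow> reach G F a b"
  using reach_edge[of e F G] by simp

lemma reach_gen:
  assumes "\<forall>f\<in>F1 \<inter> gedges H. reach G F2 (fst (gends H f)) (snd (gends H f))"
    and "reach H F1 u v"
  shows "reach G F2 u v"
  using assms(2) unfolding reach_def[of H]
proof (induction rule: rtranclp_induct)
  case base then show ?case by simp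
next
  case (step y z)
  then obtain e where e: "e \<in> F1 \<inter> gedges H" "gends H e = (y, z) \<or> gends H e = (z, y)" by blast
  have r: "reach G F2 (fst (gends H e)) (snd (gends H e))" using assms(1) e(1) by blast
  have "reach G F2 y z" using e(2)
  proof
    assume "gends H e = (y, z)" then show ?thesis using r by simp
  next
    assume "gends H e = (z, y)" then show ?thesis using r reach_sym by fastforce
  qed
  with step show ?case by (blast intro: reach_trans)
qed

definition cls :: "('v,'e) mgraph \<Rightarrow> 'e set \<Rightarrow> 'v \<Rightarrow> 'v set" where
  "cls G F u = {v\<in>gverts G. reach G F u v}"

lemma cls_eq: "reach G F a b \<Longrightarrow> cls G F a = cls G F b"
  unfolding cls_def by (auto intro: reach_trans reach_sym)

lemma cls_self: "a \<in> gverts G \<Longrightarrow> a \<in> cls G F a"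
  unfolding cls_def by simp

lemma cls_sub: "cls G F a \<subseteq> gverts G"
  unfolding cls_def by auto

lemma num_cycles_cls:
  assumes wf: "wf_graph G" and FE: "F \<subseteq> gedges G"
  shows "num_cycles G F = card (cls G F ` {v\<in>gverts G. deg_in G F v \<noteq> 0})"
proof -
  have finF: "finite F" using wf FE unfolding wf_graph_def by (auto intro: finite_subset)
  have ends: "fst (gends G e) \<in> gverts G" "snd (gends G e) \<in> gverts G" if "e \<in> F" for e
    using wf FE that unfolding wf_graph_def by auto
  have "{K \<in> components G F. \<exists>e\<in>F. fst (gends G e) \<in> K} = cls G F ` {v\<in>gverts G. deg_in G F v \<noteq> 0}"
  proof (rule set_eqI, rule iffI)
    fix K assume "K \<in> {K \<in> components G F. \<exists>e\<in>F. fst (gends G e) \<in> K}"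
    then obtain u e where u: "u \<in> gverts G" "K = cls G F u" and e: "e \<in> F" "fst (gends G e) \<in> K"
      unfolding components_def cls_def by auto
    let ?a = "fst (gends G e)"
    have "reach G F u ?a" using e u unfolding cls_def by auto
    then have "K = cls G F ?a" using u cls_eq by metis
    moreover have "deg_in G F ?a \<noteq> 0"
    proof -
      have "e \<in> {e'\<in>F. fst (gends G e') = ?a}" using e by simp
      then have "card {e'\<in>F. fst (gends G e') = ?a} \<noteq> 0" using finF by (auto simp: card_eq_0_iff)
      then show ?thesis unfolding deg_in_def by simp
    qed
    ultimately show "K \<in> cls G F ` {v\<in>gverts G. deg_in G F v \<noteq> 0}" using ends(1)[OF e(1)] by blast
  next
    fix K assume "K \<in> cls G F ` {v\<in>gverts G. deg_in G F v \<noteq> 0}"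
    then obtain v where v: "v \<in> gverts G" "deg_in G F v \<noteq> 0" "K = cls G F v" by auto
    have Kc: "K \<in> components G F" using v unfolding components_def cls_def by auto
    from v(2) have "card {e\<in>F. fst (gends G e) = v} \<noteq> 0 \<or> card {e\<in>F. snd (gends G e) = v} \<noteq> 0"
      unfolding deg_in_def by linarith
    then have "{e\<in>F. fst (gends G e) = v} \<noteq> {} \<or> {e\<in>F. snd (gends G e) = v} \<noteq> {}"
      by (metis card.empty)
    then obtain e where e: "e \<in> F" "fst (gends G e) = v \<or> snd (gends G e) = v" by auto
    have "fst (gends G e) \<in> K"
    proof (cases "fst (gends G e) = v")
      case True then show ?thesis using v cls_self by metis
    next
      case False
      then have "snd (gends G e) = v" using e by auto
      then have "reach G F v (fst (gends G e))" using reach_edge[OF e(1)] FE e(1) reach_sym by fastforce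
      then show ?thesis using v(3) ends(1)[OF e(1)] unfolding cls_def by auto
    qed
    then show "K \<in> {K \<in> components G F. \<exists>e\<in>F. fst (gends G e) \<in> K}" using Kc e by auto
  qed
  then show ?thesis unfolding num_cycles_def by simp
qed

lemma cut_parity:
  assumes wf: "wf_graph G" and FE: "F \<subseteq> gedges G"
    and ev: "\<forall>v\<in>gverts G. even (deg_in G F v)" and S: "S \<subseteq> gverts G"
  shows "even (card {f\<in>F. (fst (gends G f) \<in> S) \<noteq> (snd (gends G f) \<in> S)})"
proof -
  have finF: "finite F" using wf FE unfolding wf_graph_def by (auto intro: finite_subset)
  have finS: "finite S" using wf S unfolding wf_graph_def by (auto intro: finite_subset)
  have "even (\<Sum>v\<in>S. deg_in G F v)" using ev S by (auto intro!: even_sum_iff[THEN iffD2] dvd_sum)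
  also have "(\<Sum>v\<in>S. deg_in G F v) = (\<Sum>v\<in>S. \<Sum>f\<in>F. inc G f v)" using finF by (simp add: deg_in_sum)
  also have "\<dots> = (\<Sum>f\<in>F. \<Sum>v\<in>S. inc G f v)" by (rule sum.swap)
  also have "\<dots> = (\<Sum>f\<in>F. (if (fst (gends G f) \<in> S) \<noteq> (snd (gends G f) \<in> S) then 1 else 0)
       + 2 * (if fst (gends G f) \<in> S \<and> snd (gends G f) \<in> S then 1 else 0))"
  proof (rule sum.cong[OF refl])
    fix f
    have "(\<Sum>v\<in>S. inc G f v) = (if fst (gends G f) \<in> S then 1 else 0) + (if snd (gends G f) \<in> S then 1 else 0)"
      unfolding inc_def using finS by (simp add: sum.distrib sum.delta)
    then show "(\<Sum>v\<in>S. inc G f v) = (if (fst (gends G f) \<in> S) \<noteq> (snd (gends G f) \<in> S) then 1 else 0)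
       + 2 * (if fst (gends G f) \<in> S \<and> snd (gends G f) \<in> S then 1 else 0)" by auto
  qed
  also have "\<dots> = card {f\<in>F. (fst (gends G f) \<in> S) \<noteq> (snd (gends G f) \<in> S)}
       + 2 * (\<Sum>f\<in>F. (if fst (gends G f) \<in> S \<and> snd (gends G f) \<in> S then 1 else 0))"
    using finF by (simp add: sum.distrib card_filter_sum sum_distrib_left)
  finally show ?thesis by simp
qed

lemma no_bridge:
  assumes wf: "wf_graph G" and ec: "even_cover G F" and e: "e \<in> F"
  shows "reach G (F - {e}) (fst (gends G e)) (snd (gends G e))"
proof (rule ccontr)
  let ?a = "fst (gends G e)" and ?b = "snd (gends G e)"
  assume nr: "\<not> reach G (F - {e}) ?a ?b"
  define S where "S = {v\<in>gverts G. reach G (F - {e}) ?a v}"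
  have FE: "F \<subseteq> gedges G" using ec unfolding even_cover_def by auto
  have ev: "\<forall>v\<in>gverts G. even (deg_in G F v)" using ec unfolding even_cover_def by auto
  have ab: "?a \<in> gverts G" "?b \<in> gverts G" using wf FE e unfolding wf_graph_def by auto
  have "{f\<in>F. (fst (gends G f) \<in> S) \<noteq> (snd (gends G f) \<in> S)} = {e}"
  proof (rule set_eqI, rule iffI)
    fix f assume f: "f \<in> {f\<in>F. (fst (gends G f) \<in> S) \<noteq> (snd (gends G f) \<in> S)}"
    show "f \<in> {e}"
    proof (rule ccontr)
      assume "f \<notin> {e}"
      then have fF: "f \<in> F - {e}" "f \<in> gedges G" using f FE by auto
      have r: "reach G (F - {e}) (fst (gends G f)) (snd (gends G f))" by (rule reach_edge[OF fF])
      have ends: "fst (gends G f) \<in> gverts G" "snd (gends G f) \<in> gverts G" using wf fF unfolding wf_graph_def by auto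
      from f have "(fst (gends G f) \<in> S) \<noteq> (snd (gends G f) \<in> S)" by simp
      then show False using r reach_sym[OF r] ends unfolding S_def by (auto intro: reach_trans)
    qed
  next
    fix f assume "f \<in> {e}"
    then show "f \<in> {f\<in>F. (fst (gends G f) \<in> S) \<noteq> (snd (gends G f) \<in> S)}"
      using e nr ab unfolding S_def by auto
  qed
  moreover have "even (card {f\<in>F. (fst (gends G f) \<in> S) \<noteq> (snd (gends G f) \<in> S)})"
    by (rule cut_parity[OF wf FE ev]) (auto simp: S_def)
  ultimately show False by simp
qed



lemma min_cover:
  assumes wf: "wf_graph X" and ne: "\<exists>F. even_cover X F \<and> P F"
  shows "\<exists>F0. F0 \<in> {F. even_cover X F \<and> P F} \<and> (\<forall>F\<in>{F. even_cover X F \<and> P F}. exc_cover X F0 \<le> exc_cover X F)"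
proof -
  let ?S = "{F. even_cover X F \<and> P F}"
  have fin: "finite ?S"
  proof (rule finite_subset)
    show "?S \<subseteq> Pow (gedges X)" unfolding even_cover_def by auto
    show "finite (Pow (gedges X))" using wf unfolding wf_graph_def by simp
  qed
  have "Min (exc_cover X ` ?S) \<in> exc_cover X ` ?S" using fin ne by (intro Min_in) auto
  then obtain F0 where F0: "F0 \<in> ?S" "exc_cover X F0 = Min (exc_cover X ` ?S)" by auto
  have "\<forall>F\<in>?S. exc_cover X F0 \<le> exc_cover X F" using F0(2) fin by simp
  then show ?thesis using F0(1) by blast
qed

lemma INF_min:
  assumes "F0 \<in> S" "\<forall>F\<in>S. g F0 \<le> g F"
  shows "(INF F\<in>S. ereal (real (g F))) = ereal (real (g F0))"
proof (rule antisym)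
  show "(INF F\<in>S. ereal (real (g F))) \<le> ereal (real (g F0))" using assms(1) by (rule INF_lower)
  show "ereal (real (g F0)) \<le> (INF F\<in>S. ereal (real (g F)))" using assms(2) by (intro INF_greatest) simp
qed

lemma INF_nonneg: "0 \<le> (INF F\<in>S. ereal (real (g F)))"
  by (rule INF_greatest) simp

lemma nonempty_with:
  assumes "delta X e + delta_hat X e \<le> 0"
  shows "\<exists>F. even_cover X F \<and> e \<in> F"
proof (rule ccontr)
  assume "\<not> ?thesis"
  then have E: "{F. even_cover X F \<and> e \<in> F} = {}" by auto
  have "exc_with X e = top" unfolding exc_with_def E by (simp add: top_ereal_def)
  moreover have "0 \<le> exc_without X e" unfolding exc_without_def by (rule INF_nonneg)
  ultimately have "delta X e + delta_hat X e = top" unfolding delta_def delta_hat_def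
    by (cases "exc_without X e") (simp_all add: top_ereal_def)
  then have "top \<le> (0::ereal)" using assms by metis
  then show False by (simp add: top_ereal_def)
qed

lemma nonempty_without:
  assumes "delta X e + delta_hat X e \<le> 0"
  shows "\<exists>F. even_cover X F \<and> e \<notin> F"
proof (rule ccontr)
  assume "\<not> ?thesis"
  then have E: "{F. even_cover X F \<and> e \<notin> F} = {}" by auto
  have "exc_without X e = top" unfolding exc_without_def E by (simp add: top_ereal_def)
  moreover have "0 \<le> exc_with X e + 2" unfolding exc_with_def
    using INF_nonneg[of "\<lambda>F. exc_cover X F" "{F. even_cover X F \<and> e \<in> F}"]
    by (cases "(INF F\<in>{F. even_cover X F \<and> e \<in> F}. ereal (real (exc_cover X F)))") auto
  ultimately have "delta X e + delta_hat X e = top" unfolding delta_def delta_hat_def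
    by (cases "exc_with X e") (simp_all add: top_ereal_def)
  then have "top \<le> (0::ereal)" using assms by metis
  then show False by (simp add: top_ereal_def)
qed

locale chn =
  fixes C :: "('v,'e) mgraph" and k :: nat and es :: "nat \<Rightarrow> 'e"
    and Bs :: "nat \<Rightarrow> 'v set" and xs ys :: "nat \<Rightarrow> 'v"
  assumes sc: "subcubic_chain C k es Bs xs ys"
begin

abbreviation "F0 \<equiv> gedges C - es ` {0..k}"

lemma wfC: "wf_graph C" using sc unfolding subcubic_chain_def by simp
lemma esE: "j \<le> k \<Longrightarrow> es j \<in> gedges C" using sc unfolding subcubic_chain_def by auto
lemma comps: "components C F0 = Bs ` {0..k+1}" using sc unfolding subcubic_chain_def by simp
lemma injB: "inj_on Bs {0..k+1}" using sc unfolding subcubic_chain_def by simp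
lemma B0: "Bs 0 = {ys 0}" using sc unfolding subcubic_chain_def by simp
lemma Bk: "Bs (k+1) = {xs (k+1)}" using sc unfolding subcubic_chain_def by simp
lemma esends: "j \<le> k \<Longrightarrow> ys j \<in> Bs j \<and> xs (Suc j) \<in> Bs (Suc j) \<and>
        (gends C (es j) = (ys j, xs (Suc j)) \<or> gends C (es j) = (xs (Suc j), ys j))"
  using sc unfolding subcubic_chain_def by auto

lemma Bs_cls: "i \<le> k+1 \<Longrightarrow> \<exists>u\<in>gverts C. Bs i = cls C F0 u"
proof -
  assume "i \<le> k+1"
  then have "Bs i \<in> components C F0" using comps by auto
  then show ?thesis unfolding components_def cls_def by auto
qed

lemma Bs_sub: "i \<le> k+1 \<Longrightarrow> Bs i \<subseteq> gverts C"
  using Bs_cls cls_sub by metis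

lemma in_Bs_same: "i \<le> k+1 \<Longrightarrow> j \<le> k+1 \<Longrightarrow> x \<in> Bs i \<Longrightarrow> x \<in> Bs j \<Longrightarrow> i = j"
proof -
  assume ij: "i \<le> k+1" "j \<le> k+1" and x: "x \<in> Bs i" "x \<in> Bs j"
  obtain u where u: "Bs i = cls C F0 u" using Bs_cls ij(1) by blast
  obtain w where w: "Bs j = cls C F0 w" using Bs_cls ij(2) by blast
  have "reach C F0 u x" "reach C F0 w x" using x u w unfolding cls_def by auto
  then have "cls C F0 u = cls C F0 w" by (metis cls_eq reach_sym)
  then have "Bs i = Bs j" using u w by simp
  then show "i = j" using injB ij by (auto dest: inj_onD)
qed

lemma V_union: "v \<in> gverts C \<Longrightarrow> \<exists>i\<le>k+1. v \<in> Bs i"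
proof -
  assume v: "v \<in> gverts C"
  then have "cls C F0 v \<in> components C F0" unfolding components_def cls_def by auto
  then obtain i where "i \<le> k+1" "cls C F0 v = Bs i" using comps by auto
  then show ?thesis using cls_self[OF v] by metis
qed

lemma Bs_closed: "i \<le> k+1 \<Longrightarrow> x \<in> Bs i \<Longrightarrow> reach C F0 x y \<Longrightarrow> y \<in> gverts C \<Longrightarrow> y \<in> Bs i"
proof -
  assume a: "i \<le> k+1" "x \<in> Bs i" "reach C F0 x y" "y \<in> gverts C"
  obtain u where u: "Bs i = cls C F0 u" using Bs_cls a(1) by blast
  then show ?thesis using a unfolding cls_def by (auto intro: reach_trans)
qed

lemma F0_edge: "e \<in> gedges C \<Longrightarrow> e \<notin> es ` {0..k} \<Longrightarrow>
   \<exists>i\<le>k+1. fst (gends C e) \<in> Bs i \<and> snd (gends C e) \<in> Bs i"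
proof -
  assume e: "e \<in> gedges C" "e \<notin> es ` {0..k}"
  have ends: "fst (gends C e) \<in> gverts C" "snd (gends C e) \<in> gverts C"
    using wfC e unfolding wf_graph_def by auto
  obtain i where i: "i \<le> k+1" "fst (gends C e) \<in> Bs i" using V_union ends(1) by blast
  have "reach C F0 (fst (gends C e)) (snd (gends C e))" using e by (intro reach_edge) auto
  then show ?thesis using Bs_closed i ends by blast
qed

lemma es_inj: "j \<le> k \<Longrightarrow> j' \<le> k \<Longrightarrow> es j = es j' \<Longrightarrow> j = j'"
proof -
  assume a: "j \<le> k" "j' \<le> k" "es j = es j'"
  have A: "ys j \<in> Bs j" "xs (Suc j) \<in> Bs (Suc j)" using esends a(1) by auto
  have B: "ys j' \<in> Bs j'" "xs (Suc j') \<in> Bs (Suc j')" using esends a(2) by auto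
  have "{fst (gends C (es j)), snd (gends C (es j))} = {ys j, xs (Suc j)}" using esends[OF a(1)] by auto
  moreover have "{fst (gends C (es j')), snd (gends C (es j'))} = {ys j', xs (Suc j')}" using esends[OF a(2)] by auto
  ultimately have eq: "{ys j, xs (Suc j)} = {ys j', xs (Suc j')}" using a(3) by simp
  have "j = j' \<or> j = Suc j'"
  proof -
    have "ys j = ys j' \<or> ys j = xs (Suc j')" using eq by blast
    then show ?thesis using A B a in_Bs_same[of j j' "ys j"] in_Bs_same[of j "Suc j'" "ys j"] by force
  qed
  moreover have "Suc j = j' \<or> Suc j = Suc j'"
  proof -
    have "xs (Suc j) = ys j' \<or> xs (Suc j) = xs (Suc j')" using eq by blast
    then show ?thesis using A B a in_Bs_same[of "Suc j" j' "xs (Suc j)"] in_Bs_same[of "Suc j" "Suc j'" "xs (Suc j)"] by force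
  qed
  ultimately show "j = j'" by auto
qed


end

locale chn2 = chn +
  assumes k1: "1 \<le> k"
begin

abbreviation "G \<equiv> chain_closure C k xs ys"
abbreviation "H \<equiv> chain_block C k es Bs xs ys"
definition "BI i = gedges (block_graph C k es Bs i)"
definition "Ring = insert None (Some ` es ` {1..k-1})"

lemma BI_def': "BI i = {e \<in> gedges C - es ` {0..k}. fst (gends C e) \<in> Bs i \<and> snd (gends C e) \<in> Bs i}"
  unfolding BI_def block_graph_def by simp

lemma G_verts: "gverts G = (\<Union>i\<in>{1..k}. Bs i)"
proof -
  have "gverts G = gverts C - {ys 0, xs (k+1)}" unfolding chain_closure_def by simp
  also have "\<dots> = (\<Union>i\<in>{1..k}. Bs i)"
  proof (rule set_eqI, rule iffI)
    fix v assume v: "v \<in> gverts C - {ys 0, xs (k+1)}"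
    then obtain i where i: "i \<le> k+1" "v \<in> Bs i" using V_union by blast
    have "i \<noteq> 0"
    proof
      assume "i = 0" then have "v = ys 0" using i(2) B0 by simp
      then show False using v by simp
    qed
    moreover have "i \<noteq> k+1"
    proof
      assume "i = k+1" then have "v = xs (k+1)" using i(2) Bk by simp
      then show False using v by simp
    qed
    ultimately show "v \<in> (\<Union>i\<in>{1..k}. Bs i)" using i by auto
  next
    fix v assume "v \<in> (\<Union>i\<in>{1..k}. Bs i)"
    then obtain i where i: "i \<in> {1..k}" "v \<in> Bs i" by auto
    have "v \<in> gverts C" using Bs_sub[of i] i by auto
    moreover have "v \<noteq> ys 0" using in_Bs_same[of i 0 v] i B0 by auto
    moreover have "v \<noteq> xs (k+1)" using in_Bs_same[of i "k+1" v] i Bk by auto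
    ultimately show "v \<in> gverts C - {ys 0, xs (k+1)}" by auto
  qed
  finally show ?thesis .
qed

lemma G_edges: "gedges G = Ring \<union> Some ` (\<Union>i\<in>{1..k}. BI i)"
proof -
  have "gedges G = insert None (Some ` {e\<in>gedges C.
                   fst (gends C e) \<notin> {ys 0, xs (k+1)} \<and> snd (gends C e) \<notin> {ys 0, xs (k+1)}})"
    unfolding chain_closure_def by simp
  moreover have "{e\<in>gedges C. fst (gends C e) \<notin> {ys 0, xs (k+1)} \<and> snd (gends C e) \<notin> {ys 0, xs (k+1)}}
      = es ` {1..k-1} \<union> (\<Union>i\<in>{1..k}. BI i)"
  proof (rule set_eqI, rule iffI)
    fix e assume e: "e \<in> {e\<in>gedges C. fst (gends C e) \<notin> {ys 0, xs (k+1)} \<and> snd (gends C e) \<notin> {ys 0, xs (k+1)}}"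
    show "e \<in> es ` {1..k-1} \<union> (\<Union>i\<in>{1..k}. BI i)"
    proof (cases "e \<in> es ` {0..k}")
      case True
      then obtain j where j: "j \<le> k" "e = es j" by auto
      have "j \<noteq> 0"
      proof
        assume "j = 0" then show False using esends[of 0] j e by auto
      qed
      moreover have "j \<noteq> k"
      proof
        assume "j = k" then show False using esends[of k] j e by auto
      qed
      ultimately show ?thesis using j by auto
    next
      case False
      then obtain i where i: "i \<le> k+1" "fst (gends C e) \<in> Bs i" "snd (gends C e) \<in> Bs i"
        using F0_edge e by blast
      have "i \<noteq> 0"
      proof
        assume "i = 0" then show False using i e B0 by auto
      qed
      moreover have "i \<noteq> k+1"
      proof
        assume "i = k+1" then show False using i e Bk by auto
      qed
      ultimately show ?thesis using i e False unfolding BI_def' by auto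
    qed
  next
    fix e assume e: "e \<in> es ` {1..k-1} \<union> (\<Union>i\<in>{1..k}. BI i)"
    show "e \<in> {e\<in>gedges C. fst (gends C e) \<notin> {ys 0, xs (k+1)} \<and> snd (gends C e) \<notin> {ys 0, xs (k+1)}}"
    proof (cases "e \<in> es ` {1..k-1}")
      case True
      then obtain j where j: "1 \<le> j" "j \<le> k - 1" "e = es j" by auto
      have jk: "j \<le> k" using j by auto
      have yj: "ys j \<in> Bs j" "xs (Suc j) \<in> Bs (Suc j)" using esends[OF jk] by auto
      have b0: "ys 0 \<in> Bs 0" and bk: "xs (k+1) \<in> Bs (k+1)" using B0 Bk by auto
      have ne1: "ys j \<noteq> ys 0"
      proof
        assume h: "ys j = ys 0" then have "j = 0" using in_Bs_same[of j 0 "ys j"] yj b0 jk by simp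
        then show False using j by simp
      qed
      have ne2: "ys j \<noteq> xs (k+1)"
      proof
        assume h: "ys j = xs (k+1)" then have "j = k+1" using in_Bs_same[of j "k+1" "ys j"] yj bk jk by simp
        then show False using j by simp
      qed
      have ne3: "xs (Suc j) \<noteq> ys 0"
      proof
        assume h: "xs (Suc j) = ys 0" then have "Suc j = 0" using in_Bs_same[of "Suc j" 0 "xs (Suc j)"] yj b0 jk by simp
        then show False by simp
      qed
      have ne4: "xs (Suc j) \<noteq> xs (k+1)"
      proof
        assume h: "xs (Suc j) = xs (k+1)" then have "Suc j = k+1" using in_Bs_same[of "Suc j" "k+1" "xs (Suc j)"] yj bk jk by simp
        then show False using j k1 by simp
      qed
      note ne = ne1 ne2 ne3 ne4
      then show ?thesis using esE[OF jk] esends[OF jk] j by auto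
    next
      case False
      then obtain i where i: "i \<in> {1..k}" "e \<in> BI i" using e by auto
      have "fst (gends C e) \<in> Bs i" "snd (gends C e) \<in> Bs i" "e \<in> gedges C" using i unfolding BI_def' by auto
      then show ?thesis using i in_Bs_same[of i 0] in_Bs_same[of i "k+1"] B0 Bk by fastforce
    qed
  qed
  ultimately show ?thesis unfolding Ring_def by auto
qed

lemma H_verts: "gverts (H i) = Bs i" unfolding chain_block_def by simp
lemma H_edges: "gedges (H i) = insert None (Some ` BI i)" unfolding chain_block_def BI_def by simp
lemma G_ends[simp]: "gends G (Some e) = gends C e" "gends G None = (xs 1, ys k)"
  unfolding chain_closure_def by simp_all
lemma H_ends[simp]: "gends (H i) (Some e) = gends C e" "gends (H i) None = (xs i, ys i)"
  unfolding chain_block_def by simp_all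

lemma BI_ends: "e \<in> BI i \<Longrightarrow> fst (gends C e) \<in> Bs i \<and> snd (gends C e) \<in> Bs i \<and> e \<in> gedges C \<and> e \<notin> es ` {0..k}"
  unfolding BI_def' by auto

lemma BI_disj: "i \<le> k+1 \<Longrightarrow> j \<le> k+1 \<Longrightarrow> e \<in> BI i \<Longrightarrow> e \<in> BI j \<Longrightarrow> i = j"
  using BI_ends in_Bs_same by metis

lemma xy_in: "i \<in> {1..k} \<Longrightarrow> xs i \<in> Bs i \<and> ys i \<in> Bs i"
  using esends[of i] esends[of "i-1"] by (cases i) auto

lemma wf_H: "i \<in> {1..k} \<Longrightarrow> wf_graph (H i)"
proof -
  assume i: "i \<in> {1..k}"
  have "finite (Bs i)" using Bs_sub[of i] i wfC unfolding wf_graph_def by (auto intro: finite_subset)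
  moreover have "finite (BI i)" using wfC unfolding wf_graph_def BI_def' by auto
  ultimately show ?thesis unfolding wf_graph_def H_verts H_edges using BI_ends xy_in[OF i] by auto
qed

lemma wf_G: "wf_graph G"
proof -
  have "finite (gverts G)" unfolding chain_closure_def using wfC unfolding wf_graph_def by auto
  moreover have "finite (gedges G)" unfolding chain_closure_def using wfC unfolding wf_graph_def by auto
  moreover have "\<forall>e\<in>gedges G. fst (gends G e) \<in> gverts G \<and> snd (gends G e) \<in> gverts G"
  proof
    fix f assume f: "f \<in> gedges G"
    show "fst (gends G f) \<in> gverts G \<and> snd (gends G f) \<in> gverts G"
    proof (cases f)
      case None then show ?thesis using xy_in[of 1] xy_in[of k] k1 unfolding G_verts by auto
    next
      case (Some e)
      then have "e \<in> gedges C" "fst (gends C e) \<notin> {ys 0, xs (k+1)}" "snd (gends C e) \<notin> {ys 0, xs (k+1)}"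
        using f unfolding chain_closure_def by auto
      then show ?thesis using Some wfC unfolding wf_graph_def chain_closure_def by auto
    qed
  qed
  ultimately show ?thesis unfolding wf_graph_def by blast
qed

end

locale chn3 = chn2 +
  assumes k2: "2 \<le> k"
begin


lemma inc_es: "j \<le> k \<Longrightarrow> inc G (Some (es j)) v = (if ys j = v then 1 else 0) + (if xs (Suc j) = v then 1 else 0)"
proof -
  assume "j \<le> k"
  then have "gends C (es j) = (ys j, xs (Suc j)) \<or> gends C (es j) = (xs (Suc j), ys j)" using esends by blast
  then show ?thesis unfolding inc_def by (elim disjE) simp_all
qed

lemma inc_None: "inc G None v = (if xs 1 = v then 1 else 0) + (if ys k = v then 1 else 0)"
  unfolding inc_def by simp

lemma incH_None: "inc (H i) None v = (if xs i = v then 1 else 0) + (if ys i = v then 1 else 0)"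
  unfolding inc_def by simp

lemma incH_Some: "inc (H i) (Some e) v = inc G (Some e) v"
  unfolding inc_def by simp

lemma Ring_img: "Ring = insert None ((\<lambda>j. Some (es j)) ` {1..k-1})"
  unfolding Ring_def by auto

lemma inj_ring: "inj_on (\<lambda>j. Some (es j)) {1..k-1}"
  by (rule inj_onI) (use es_inj in auto)

lemma finite_Ring: "finite Ring" unfolding Ring_def by simp

lemma ring_sum:
  assumes i: "i \<in> {1..k}" and v: "v \<in> Bs i"
  shows "(\<Sum>f\<in>Ring. inc G f v) = inc (H i) None v"
proof -
  have "(\<Sum>f\<in>Ring. inc G f v) = inc G None v + (\<Sum>j\<in>{1..k-1}. inc G (Some (es j)) v)"
  proof -
    have nn: "None \<notin> (\<lambda>j. Some (es j)) ` {1..k-1}" by auto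
    have "(\<Sum>f\<in>Ring. inc G f v) = inc G None v + (\<Sum>f\<in>(\<lambda>j. Some (es j)) ` {1..k-1}. inc G f v)"
      unfolding Ring_img using nn by (subst sum.insert) auto
    also have "(\<Sum>f\<in>(\<lambda>j. Some (es j)) ` {1..k-1}. inc G f v) = (\<Sum>j\<in>{1..k-1}. inc G (Some (es j)) v)"
      by (subst sum.reindex[OF inj_ring]) simp
    finally show ?thesis .
  qed
  also have "(\<Sum>j\<in>{1..k-1}. inc G (Some (es j)) v) =
     (\<Sum>j\<in>{1..k-1}. (if j = i then (if ys i = v then 1 else 0) else 0)
                    + (if j = i - 1 then (if xs i = v then 1 else 0) else 0))"
  proof (rule sum.cong[OF refl])
    fix j assume j: "j \<in> {1..k-1}"
    then have jk: "j \<le> k" by auto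
    have yj: "ys j \<in> Bs j" "xs (Suc j) \<in> Bs (Suc j)" using esends[OF jk] by blast+
    have A: "(if ys j = v then 1 else 0) = (if j = i then (if ys i = v then 1 else 0) else (0::nat))"
    proof (cases "ys j = v")
      case True then have "j = i" using in_Bs_same[of j i v] yj i v jk by auto
      then show ?thesis using True by simp
    qed auto
    have B: "(if xs (Suc j) = v then 1 else 0) = (if j = i - 1 then (if xs i = v then 1 else 0) else (0::nat))"
    proof (cases "xs (Suc j) = v")
      case True then have "Suc j = i" using in_Bs_same[of "Suc j" i v] yj i v jk by auto
      then show ?thesis using True by auto
    next
      case False
      then show ?thesis using i by auto
    qed
    show "inc G (Some (es j)) v = (if j = i then (if ys i = v then 1 else 0) else 0)
                    + (if j = i - 1 then (if xs i = v then 1 else 0) else 0)"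
      unfolding inc_es[OF jk] A B ..
  qed
  also have "\<dots> = (if i \<in> {1..k-1} then (if ys i = v then 1 else 0) else 0)
                 + (if i - 1 \<in> {1..k-1} then (if xs i = v then 1 else 0) else 0)"
    by (simp add: sum.distrib sum.delta)
  finally have S: "(\<Sum>f\<in>Ring. inc G f v) = inc G None v + ((if i \<in> {1..k-1} then (if ys i = v then 1 else 0) else 0)
                 + (if i - 1 \<in> {1..k-1} then (if xs i = v then 1 else 0) else 0))" .
  have X1: "(if xs 1 = v then 1 else 0) = (if i = 1 then (if xs i = v then 1 else 0) else (0::nat))"
    using in_Bs_same[of 1 i v] xy_in[of 1] i v k2 by auto
  have Yk: "(if ys k = v then 1 else 0) = (if i = k then (if ys i = v then 1 else 0) else (0::nat))"
    using in_Bs_same[of k i v] xy_in[of k] i v k2 by auto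
  show ?thesis unfolding S inc_None incH_None X1 Yk using i k2 by auto
qed

lemma deg_decomp:
  assumes FE: "F \<subseteq> gedges G" and rc: "F \<inter> Ring = {} \<or> Ring \<subseteq> F"
    and i: "i \<in> {1..k}" and v: "v \<in> Bs i"
  shows "deg_in G F v = deg_in (H i) (F \<inter> gedges (H i)) v"
proof -
  have finF: "finite F" using FE wf_G unfolding wf_graph_def by (auto intro: finite_subset)
  have NR: "None \<in> Ring" unfolding Ring_def by simp
  have RS: "Ring \<inter> Some ` BI i = {}"
  proof -
    have "\<forall>j\<in>{1..k-1}. es j \<notin> BI i"
    proof
      fix j assume j: "j \<in> {1..k-1}"
      show "es j \<notin> BI i"
      proof
        assume "es j \<in> BI i"
        then have "es j \<notin> es ` {0..k}" using BI_ends by blast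
        then show False using j by auto
      qed
    qed
    then show ?thesis unfolding Ring_def by blast
  qed
  have "deg_in G F v = (\<Sum>f\<in>F. inc G f v)" using finF by (rule deg_in_sum)
  also have "\<dots> = (\<Sum>f\<in>F \<inter> Ring. inc G f v) + (\<Sum>f\<in>F - Ring. inc G f v)"
    using finF by (rule sum.Int_Diff)
  also have "(\<Sum>f\<in>F - Ring. inc G f v) = (\<Sum>f\<in>F \<inter> Some ` BI i. inc G f v)"
  proof (rule sum.mono_neutral_right)
    show "finite (F - Ring)" using finF by simp
    show "F \<inter> Some ` BI i \<subseteq> F - Ring" using RS by auto
    show "\<forall>f\<in>F - Ring - F \<inter> Some ` BI i. inc G f v = 0"
    proof
      fix f assume f: "f \<in> F - Ring - F \<inter> Some ` BI i"
      then have "f \<in> Some ` (\<Union>i\<in>{1..k}. BI i)" using FE G_edges by auto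
      then obtain j e where je: "j \<in> {1..k}" "e \<in> BI j" "f = Some e" by auto
      have "j \<noteq> i" using f je by auto
      then have "fst (gends C e) \<noteq> v" "snd (gends C e) \<noteq> v"
        using BI_ends[OF je(2)] in_Bs_same[of i j v] i je v by auto
      then show "inc G f v = 0" using je unfolding inc_def by simp
    qed
  qed
  finally have L: "deg_in G F v = (\<Sum>f\<in>F \<inter> Ring. inc G f v) + (\<Sum>f\<in>F \<inter> Some ` BI i. inc G f v)" .
  have finF': "finite (F \<inter> gedges (H i))" using finF by simp
  have eqE: "F \<inter> gedges (H i) = (F \<inter> {None}) \<union> (F \<inter> Some ` BI i)" unfolding H_edges by auto
  have "deg_in (H i) (F \<inter> gedges (H i)) v = (\<Sum>f\<in>(F \<inter> {None}) \<union> (F \<inter> Some ` BI i). inc (H i) f v)"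
    unfolding eqE using finF by (intro deg_in_sum) auto
  also have "(\<Sum>f\<in>(F \<inter> {None}) \<union> (F \<inter> Some ` BI i). inc (H i) f v)
      = (\<Sum>f\<in>F \<inter> {None}. inc (H i) f v) + (\<Sum>f\<in>F \<inter> Some ` BI i. inc (H i) f v)"
    using finF by (intro sum.union_disjoint) auto
  also have "(\<Sum>f\<in>F \<inter> Some ` BI i. inc (H i) f v) = (\<Sum>f\<in>F \<inter> Some ` BI i. inc G f v)"
    by (rule sum.cong) (auto simp: incH_Some)
  finally have R: "deg_in (H i) (F \<inter> gedges (H i)) v = (\<Sum>f\<in>F \<inter> {None}. inc (H i) f v) + (\<Sum>f\<in>F \<inter> Some ` BI i. inc G f v)" .
  have "(\<Sum>f\<in>F \<inter> Ring. inc G f v) = (\<Sum>f\<in>F \<inter> {None}. inc (H i) f v)"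
    using rc
  proof
    assume "F \<inter> Ring = {}" then have "None \<notin> F" using NR by auto
    then show ?thesis using \<open>F \<inter> Ring = {}\<close> by simp
  next
    assume "Ring \<subseteq> F"
    then have "F \<inter> Ring = Ring" "F \<inter> {None} = {None}" using NR by auto
    then show ?thesis using ring_sum[OF i v] by simp
  qed
  then show ?thesis using L R by simp
qed

lemma ec_decomp:
  assumes FE: "F \<subseteq> gedges G" and rc: "F \<inter> Ring = {} \<or> Ring \<subseteq> F"
  shows "even_cover G F \<longleftrightarrow> (\<forall>i\<in>{1..k}. even_cover (H i) (F \<inter> gedges (H i)))"
  using deg_decomp[OF FE rc] FE unfolding even_cover_def G_verts H_verts by auto


definition "Lf i = (if i = 1 then None else Some (es (i-1)))"
definition "Rf i = (if i = k then None else Some (es i))"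

lemma in_Bs_iff: "j \<le> k+1 \<Longrightarrow> x \<in> Bs j \<Longrightarrow> i \<le> k+1 \<Longrightarrow> x \<in> Bs i \<longleftrightarrow> i = j"
  using in_Bs_same by blast

lemma cross:
  assumes i: "i \<in> {1..k}" and FE: "F \<subseteq> gedges G"
  shows "{f\<in>F. (fst (gends G f) \<in> Bs i) \<noteq> (snd (gends G f) \<in> Bs i)} = F \<inter> {Lf i, Rf i}"
proof (rule set_eqI)
  fix f
  have ik: "i \<le> k+1" using i by auto
  show "f \<in> {f\<in>F. (fst (gends G f) \<in> Bs i) \<noteq> (snd (gends G f) \<in> Bs i)} \<longleftrightarrow> f \<in> F \<inter> {Lf i, Rf i}"
  proof (cases "f \<in> F")
    case False then show ?thesis by simp
  next
    case fF: True
    then have "f \<in> Ring \<union> Some ` (\<Union>i\<in>{1..k}. BI i)" using FE G_edges by auto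
    then consider "f = None" | j where "j \<in> {1..k-1}" "f = Some (es j)"
      | j e where "j \<in> {1..k}" "e \<in> BI j" "f = Some e" unfolding Ring_def by auto
    then show ?thesis
    proof cases
      case 1
      have a: "xs 1 \<in> Bs i \<longleftrightarrow> i = 1" using in_Bs_iff[of 1 "xs 1" i] xy_in[of 1] k2 ik by auto
      have b: "ys k \<in> Bs i \<longleftrightarrow> i = k" using in_Bs_iff[of k "ys k" i] xy_in[of k] k2 ik by auto
      have c: "None \<in> {Lf i, Rf i} \<longleftrightarrow> i = 1 \<or> i = k" unfolding Lf_def Rf_def by auto
      show ?thesis using 1 a b c fF k2 by auto
    next
      case 2
      then have jk: "j \<le> k" by auto
      have yj: "ys j \<in> Bs j" "xs (Suc j) \<in> Bs (Suc j)" using esends[OF jk] by blast+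
      have a: "ys j \<in> Bs i \<longleftrightarrow> i = j" using in_Bs_iff[of j "ys j" i] yj ik jk by auto
      have b: "xs (Suc j) \<in> Bs i \<longleftrightarrow> i = Suc j" using in_Bs_iff[of "Suc j" "xs (Suc j)" i] yj ik jk by auto
      have cr: "(fst (gends G f) \<in> Bs i) \<noteq> (snd (gends G f) \<in> Bs i) \<longleftrightarrow> i = j \<or> i = Suc j"
      proof -
        have "gends C (es j) = (ys j, xs (Suc j)) \<or> gends C (es j) = (xs (Suc j), ys j)" using esends[OF jk] by blast
        then show ?thesis using a b 2 by (elim disjE) auto
      qed
      have c: "f \<in> {Lf i, Rf i} \<longleftrightarrow> i = j \<or> i = Suc j"
      proof
        assume "f \<in> {Lf i, Rf i}"
        then have "(i \<noteq> 1 \<and> es j = es (i-1)) \<or> (i \<noteq> k \<and> es j = es i)" using 2 unfolding Lf_def Rf_def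
          by (auto split: if_splits)
        then show "i = j \<or> i = Suc j" using es_inj[of j "i-1"] es_inj[of j i] jk i by auto
      next
        assume "i = j \<or> i = Suc j"
        then show "f \<in> {Lf i, Rf i}" using 2 unfolding Lf_def Rf_def by auto
      qed
      show ?thesis using cr c fF by auto
    next
      case 3
      have e: "fst (gends C e) \<in> Bs j" "snd (gends C e) \<in> Bs j" "e \<notin> es ` {0..k}" using BI_ends[OF 3(2)] by auto
      have "(fst (gends G f) \<in> Bs i) = (snd (gends G f) \<in> Bs i)"
        using 3 e in_Bs_iff[of j "fst (gends C e)" i] in_Bs_iff[of j "snd (gends C e)" i] ik by auto
      moreover have "f \<notin> {Lf i, Rf i}" using 3 e i unfolding Lf_def Rf_def by auto
      ultimately show ?thesis by simp
    qed
  qed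
qed

lemma LR_ne: "i \<in> {1..k} \<Longrightarrow> Lf i \<noteq> Rf i"
proof -
  assume i: "i \<in> {1..k}"
  have "es (i-1) \<noteq> es i"
  proof
    assume "es (i-1) = es i"
    then have "i - 1 = i" using es_inj[of "i-1" i] i by auto
    then show False using i by auto
  qed
  then show ?thesis unfolding Lf_def Rf_def using k2 by auto
qed

lemma LR_iff:
  assumes ec: "even_cover G F" and i: "i \<in> {1..k}"
  shows "Lf i \<in> F \<longleftrightarrow> Rf i \<in> F"
proof -
  have FE: "F \<subseteq> gedges G" using ec unfolding even_cover_def by auto
  have ev: "\<forall>v\<in>gverts G. even (deg_in G F v)" using ec unfolding even_cover_def by auto
  have S: "Bs i \<subseteq> gverts G" unfolding G_verts using i by auto
  have "even (card (F \<inter> {Lf i, Rf i}))" using cut_parity[OF wf_G FE ev S] cross[OF i FE] by simp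
  then show ?thesis using LR_ne[OF i] by (cases "Lf i \<in> F"; cases "Rf i \<in> F") auto
qed

lemma ring_cond:
  assumes ec: "even_cover G F"
  shows "F \<inter> Ring = {} \<or> Ring \<subseteq> F"
proof -
  have A: "\<forall>j. j \<in> {1..k-1} \<longrightarrow> (Some (es j) \<in> F \<longleftrightarrow> None \<in> F)"
  proof
    fix j show "j \<in> {1..k-1} \<longrightarrow> (Some (es j) \<in> F \<longleftrightarrow> None \<in> F)"
    proof (induction j)
      case 0 then show ?case by simp
    next
      case (Suc j)
      show ?case
      proof
        assume sj: "Suc j \<in> {1..k-1}"
        show "Some (es (Suc j)) \<in> F \<longleftrightarrow> None \<in> F"
        proof (cases "j = 0")
          case True
          have "Lf 1 = None" "Rf 1 = Some (es 1)" unfolding Lf_def Rf_def using k2 by auto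
          then show ?thesis using LR_iff[OF ec, of 1] k2 True by auto
        next
          case False
          then have IH: "Some (es j) \<in> F \<longleftrightarrow> None \<in> F" using Suc.IH sj False by auto
          have "Lf (Suc j) = Some (es j)" "Rf (Suc j) = Some (es (Suc j))" unfolding Lf_def Rf_def using sj False by auto
          then show ?thesis using LR_iff[OF ec, of "Suc j"] sj IH by auto
        qed
      qed
    qed
  qed
  show ?thesis
  proof (cases "None \<in> F")
    case True then have "Ring \<subseteq> F" using A unfolding Ring_def by auto
    then show ?thesis by simp
  next
    case False then have "F \<inter> Ring = {}" using A unfolding Ring_def by auto
    then show ?thesis by simp
  qed
qed


lemma ring_end: "f \<in> Ring \<Longrightarrow> w = fst (gends G f) \<or> w = snd (gends G f) \<Longrightarrow> \<exists>j\<in>{1..k}. w = xs j \<or> w = ys j"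
proof -
  assume f: "f \<in> Ring" and w: "w = fst (gends G f) \<or> w = snd (gends G f)"
  from f consider "f = None" | j where "j \<in> {1..k-1}" "f = Some (es j)" unfolding Ring_def by auto
  then show ?thesis
  proof cases
    case 1 then show ?thesis using w k2 by auto
  next
    case 2
    then have jk: "j \<le> k" by auto
    have "gends C (es j) = (ys j, xs (Suc j)) \<or> gends C (es j) = (xs (Suc j), ys j)" using esends[OF jk] by blast
    then have "w = ys j \<or> w = xs (Suc j)" using w 2 by auto
    then show ?thesis
    proof
      assume "w = ys j" then show ?thesis using 2 by auto
    next
      assume "w = xs (Suc j)" moreover have "Suc j \<in> {1..k}" using 2 by auto
      ultimately show ?thesis by blast
    qed
  qed
qed

lemma deg_nz: "finite F \<Longrightarrow> f \<in> F \<Longrightarrow> fst (gends X f) = v \<Longrightarrow> deg_in X F v \<noteq> 0"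
proof -
  assume a: "finite F" "f \<in> F" "fst (gends X f) = v"
  then have "f \<in> {e\<in>F. fst (gends X e) = v}" by simp
  then have "card {e\<in>F. fst (gends X e) = v} \<noteq> 0" using a(1) by (auto simp: card_eq_0_iff)
  then show ?thesis unfolding deg_in_def by simp
qed

lemma card_UN_disj:
  assumes "finite I" "\<And>i. i \<in> I \<Longrightarrow> finite (A i)"
    and "\<And>i j. i \<in> I \<Longrightarrow> j \<in> I \<Longrightarrow> i \<noteq> j \<Longrightarrow> A i \<inter> A j = {}"
  shows "card (\<Union>i\<in>I. A i) = (\<Sum>i\<in>I. card (A i))"
  using assms by (intro card_UN_disjoint) auto

end

locale cov = chn3 +
  fixes F assumes ec: "even_cover G F"
begin

abbreviation "Fi i \<equiv> F \<inter> gedges (H i)"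
abbreviation "cl i \<equiv> cls (H i) (Fi i)"

lemma FE: "F \<subseteq> gedges G" using ec unfolding even_cover_def by auto
lemma finF: "finite F" using FE wf_G unfolding wf_graph_def by (auto intro: finite_subset)
lemma rc: "F \<inter> Ring = {} \<or> Ring \<subseteq> F" by (rule ring_cond[OF ec])
lemma ecH: "i \<in> {1..k} \<Longrightarrow> even_cover (H i) (Fi i)" using ec_decomp[OF FE rc] ec by blast
lemma degs: "i \<in> {1..k} \<Longrightarrow> v \<in> Bs i \<Longrightarrow> deg_in G F v = deg_in (H i) (Fi i) v"
  by (rule deg_decomp[OF FE rc])

lemma isolated: "num_isolated G F = (\<Sum>i\<in>{1..k}. num_isolated (H i) (Fi i))"
proof -
  have "{v\<in>gverts G. deg_in G F v = 0} = (\<Union>i\<in>{1..k}. {v\<in>Bs i. deg_in (H i) (Fi i) v = 0})"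
    unfolding G_verts using degs by auto
  moreover have "card (\<Union>i\<in>{1..k}. {v\<in>Bs i. deg_in (H i) (Fi i) v = 0}) = (\<Sum>i\<in>{1..k}. card {v\<in>Bs i. deg_in (H i) (Fi i) v = 0})"
  proof (rule card_UN_disj)
    fix i assume "i \<in> {1..k}"
    then show "finite {v\<in>Bs i. deg_in (H i) (Fi i) v = 0}" using wf_H unfolding wf_graph_def H_verts by auto
  next
    fix i j assume "i \<in> {1..k}" "j \<in> {1..k}" "i \<noteq> j"
    then show "{v\<in>Bs i. deg_in (H i) (Fi i) v = 0} \<inter> {v\<in>Bs j. deg_in (H j) (Fi j) v = 0} = {}"
      using in_Bs_same[of i j] by auto
  qed simp
  ultimately show ?thesis unfolding num_isolated_def H_verts by simp
qed

lemma Ni: "{v\<in>gverts G. deg_in G F v \<noteq> 0} = (\<Union>i\<in>{1..k}. {v\<in>Bs i. deg_in (H i) (Fi i) v \<noteq> 0})"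
  unfolding G_verts using degs by auto

lemma cl_sub: "cl i u \<subseteq> Bs i" using cls_sub[of "H i"] H_verts by metis

lemma ncH: "i \<in> {1..k} \<Longrightarrow> num_cycles (H i) (Fi i) = card (cl i ` {v\<in>Bs i. deg_in (H i) (Fi i) v \<noteq> 0})"
  using num_cycles_cls[OF wf_H, of i "Fi i"] H_verts by auto

lemma fin_cl_img: "i \<in> {1..k} \<Longrightarrow> finite (cl i ` A)" if "A \<subseteq> Bs i"
proof -
  assume i: "i \<in> {1..k}"
  have "finite (Bs i)" using wf_H[OF i] unfolding wf_graph_def H_verts by auto
  then show ?thesis using that by (auto intro: finite_subset)
qed

lemma reach_out:
  assumes nN: "None \<notin> F" and i: "i \<in> {1..k}" and u: "u \<in> Bs i" and r: "reach G F u v"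
  shows "v \<in> Bs i \<and> reach (H i) (Fi i) u v"
  using r unfolding reach_def[of G]
proof (induction rule: rtranclp_induct)
  case base then show ?case using u by simp
next
  case (step w z)
  then obtain f where f: "f \<in> F" "f \<in> gedges G" "gends G f = (w, z) \<or> gends G f = (z, w)" by blast
  have "F \<inter> Ring = {}" using rc nN unfolding Ring_def by auto
  then have "f \<notin> Ring" using f by auto
  then obtain j e where je: "j \<in> {1..k}" "e \<in> BI j" "f = Some e" using f G_edges by auto
  have ee: "fst (gends C e) \<in> Bs j" "snd (gends C e) \<in> Bs j" using BI_ends[OF je(2)] by auto
  have wz: "w \<in> Bs j" "z \<in> Bs j" using f(3) ee je by auto
  have "j = i" using in_Bs_same[of i j w] step.IH wz i je by auto
  then have fi: "f \<in> Fi i" "f \<in> gedges (H i)" using je f unfolding H_edges by auto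
  have "reach (H i) (Fi i) w z" using f(3)
  proof
    assume "gends G f = (w, z)" then show ?thesis using reach_edge'[OF fi] je by simp
  next
    assume "gends G f = (z, w)" then show ?thesis using reach_edge'[OF fi] je reach_sym by fastforce
  qed
  then show ?case using step.IH wz \<open>j = i\<close> by (auto intro: reach_trans)
qed

lemma reach_lift_Some:
  assumes "None \<notin> F'" "F' \<subseteq> F" and "reach (H i) F' u v"
  shows "reach G F u v"
proof (rule reach_gen[OF _ assms(3)])
  show "\<forall>f\<in>F' \<inter> gedges (H i). reach G F (fst (gends (H i) f)) (snd (gends (H i) f))"
  proof
    fix f assume f: "f \<in> F' \<inter> gedges (H i)"
    then obtain e where e: "f = Some e" using assms(1) by (cases f) auto
    have "f \<in> F" "f \<in> gedges G" using f assms(2) FE by auto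
    then show "reach G F (fst (gends (H i) f)) (snd (gends (H i) f))" using reach_edge e by fastforce
  qed
qed

lemma cls_out: "None \<notin> F \<Longrightarrow> i \<in> {1..k} \<Longrightarrow> u \<in> Bs i \<Longrightarrow> cls G F u = cl i u"
proof -
  assume a: "None \<notin> F" "i \<in> {1..k}" "u \<in> Bs i"
  show ?thesis
  proof (rule set_eqI, rule iffI)
    fix v assume "v \<in> cls G F u"
    then show "v \<in> cl i u" using reach_out[OF a] unfolding cls_def H_verts by auto
  next
    fix v assume v: "v \<in> cl i u"
    then have "reach G F u v" using reach_lift_Some[of "Fi i" i u v] a(1) unfolding cls_def by auto
    moreover have "v \<in> gverts G" using v cl_sub a(2) unfolding G_verts by blast
    ultimately show "v \<in> cls G F u" unfolding cls_def by simp
  qed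
qed

lemma cycles_out:
  assumes nN: "None \<notin> F"
  shows "num_cycles G F = (\<Sum>i\<in>{1..k}. num_cycles (H i) (Fi i))"
proof -
  let ?N = "\<lambda>i. {v\<in>Bs i. deg_in (H i) (Fi i) v \<noteq> 0}"
  have "num_cycles G F = card (cls G F ` (\<Union>i\<in>{1..k}. ?N i))"
    using num_cycles_cls[OF wf_G FE] Ni by simp
  also have "cls G F ` (\<Union>i\<in>{1..k}. ?N i) = (\<Union>i\<in>{1..k}. cl i ` ?N i)"
    using cls_out[OF nN] by (auto simp: image_UN intro!: SUP_cong image_cong)
  also have "card \<dots> = (\<Sum>i\<in>{1..k}. card (cl i ` ?N i))"
  proof (rule card_UN_disj)
    fix i assume "i \<in> {1..k}" then show "finite (cl i ` ?N i)" using fin_cl_img by auto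
  next
    fix i j assume ij: "i \<in> {1..k}" "j \<in> {1..k}" "i \<noteq> j"
    show "cl i ` ?N i \<inter> cl j ` ?N j = {}"
    proof (rule ccontr)
      assume "cl i ` ?N i \<inter> cl j ` ?N j \<noteq> {}"
      then obtain a b where ab: "a \<in> ?N i" "b \<in> ?N j" "cl i a = cl j b" by auto
      have "a \<in> cl i a" using ab(1) cls_self[of a "H i"] H_verts by auto
      then have "a \<in> Bs j" using ab(3) cl_sub[of j] by auto
      then show False using in_Bs_same[of i j a] ab(1) ij by auto
    qed
  qed simp
  finally show ?thesis using ncH by simp
qed


definition "R i = cl i (xs i)"
definition "Rstar = (\<Union>i\<in>{1..k}. R i)"

lemma R_sub: "R i \<subseteq> Bs i" unfolding R_def by (rule cl_sub)

lemma Fi_None: "None \<in> F \<Longrightarrow> None \<in> Fi i" unfolding H_edges by simp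

lemma xy_R: "None \<in> F \<Longrightarrow> i \<in> {1..k} \<Longrightarrow> xs i \<in> R i \<and> ys i \<in> R i"
proof -
  assume a: "None \<in> F" "i \<in> {1..k}"
  have "reach (H i) (Fi i) (xs i) (ys i)" using reach_edge'[of None "Fi i" "H i" "xs i" "ys i"] a
    unfolding H_edges by simp
  then show ?thesis using xy_in[OF a(2)] unfolding R_def cls_def H_verts by auto
qed

lemma reach_xy: "None \<in> F \<Longrightarrow> i \<in> {1..k} \<Longrightarrow> reach G F (xs i) (ys i)"
proof -
  assume a: "None \<in> F" "i \<in> {1..k}"
  have "reach (H i) (Fi i - {None}) (fst (gends (H i) None)) (snd (gends (H i) None))"
    using no_bridge[OF wf_H[OF a(2)] ecH[OF a(2)]] Fi_None[OF a(1)] by blast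
  then have "reach (H i) (Fi i - {None}) (xs i) (ys i)" by simp
  then show ?thesis using reach_lift_Some[of "Fi i - {None}"] by blast
qed

lemma reach_lift: "None \<in> F \<Longrightarrow> i \<in> {1..k} \<Longrightarrow> reach (H i) (Fi i) u v \<Longrightarrow> reach G F u v"
proof -
  assume a: "None \<in> F" "i \<in> {1..k}" "reach (H i) (Fi i) u v"
  show ?thesis
  proof (rule reach_gen[OF _ a(3)])
    show "\<forall>f\<in>Fi i \<inter> gedges (H i). reach G F (fst (gends (H i) f)) (snd (gends (H i) f))"
    proof
      fix f assume f: "f \<in> Fi i \<inter> gedges (H i)"
      show "reach G F (fst (gends (H i) f)) (snd (gends (H i) f))"
      proof (cases f)
        case None then show ?thesis using reach_xy[OF a(1,2)] by simp
      next
        case (Some e)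
        have "f \<in> F" "f \<in> gedges G" using f FE by auto
        then show ?thesis using reach_edge Some by fastforce
      qed
    qed
  qed
qed

lemma ring_conn: "None \<in> F \<Longrightarrow> i \<in> {1..k} \<Longrightarrow> reach G F (xs 1) (xs i)"
proof -
  assume nN: "None \<in> F"
  have "Ring \<subseteq> F" using rc nN unfolding Ring_def by auto
  have "\<forall>i. i \<in> {1..k} \<longrightarrow> reach G F (xs 1) (xs i)"
  proof
    fix i show "i \<in> {1..k} \<longrightarrow> reach G F (xs 1) (xs i)"
    proof (induction i)
      case 0 then show ?case by simp
    next
      case (Suc j)
      show ?case
      proof
        assume sj: "Suc j \<in> {1..k}"
        show "reach G F (xs 1) (xs (Suc j))"
        proof (cases "j = 0")
          case True then show ?thesis by simp
        next
          case False
          then have j: "j \<in> {1..k}" "j \<in> {1..k-1}" using sj by auto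
          have IH: "reach G F (xs 1) (xs j)" using Suc.IH j by auto
          have "Some (es j) \<in> Ring" unfolding Ring_def using j by auto
          then have ef: "Some (es j) \<in> F" "Some (es j) \<in> gedges G" using \<open>Ring \<subseteq> F\<close> FE by auto
          have jk: "j \<le> k" using j by auto
          have "reach G F (ys j) (xs (Suc j))"
          proof -
            have "gends C (es j) = (ys j, xs (Suc j)) \<or> gends C (es j) = (xs (Suc j), ys j)" using esends[OF jk] by blast
            then show ?thesis
            proof
              assume "gends C (es j) = (ys j, xs (Suc j))"
              then show ?thesis using reach_edge'[OF ef] by simp
            next
              assume "gends C (es j) = (xs (Suc j), ys j)"
              then show ?thesis using reach_edge'[OF ef] reach_sym by fastforce
            qed
          qed
          then show ?thesis using IH reach_xy[OF nN j(1)] by (blast intro: reach_trans)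
        qed
      qed
    qed
  qed
  then show "i \<in> {1..k} \<Longrightarrow> reach G F (xs 1) (xs i)" by blast
qed

lemma inR: "None \<in> F \<Longrightarrow> j \<in> {1..k} \<Longrightarrow> w \<in> R j \<longleftrightarrow> w \<in> Bs j \<and> reach (H j) (Fi j) (xs j) w"
  unfolding R_def cls_def H_verts by simp

lemma reach_in:
  assumes nN: "None \<in> F" and i: "i \<in> {1..k}" and u: "u \<in> Bs i" and r: "reach G F u v"
  shows "(v \<in> Bs i \<and> reach (H i) (Fi i) u v) \<or> (u \<in> R i \<and> (\<exists>j\<in>{1..k}. v \<in> R j))"
  using r unfolding reach_def[of G]
proof (induction rule: rtranclp_induct)
  case base then show ?case using u by simp
next
  case (step w z)
  then obtain f where f: "f \<in> F" "f \<in> gedges G" "gends G f = (w, z) \<or> gends G f = (z, w)" by blast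
  show ?case
  proof (cases "f \<in> Ring")
    case True
    have zR: "\<exists>j\<in>{1..k}. z \<in> R j"
    proof -
      obtain j where j: "j \<in> {1..k}" "z = xs j \<or> z = ys j" using ring_end[OF True, of z] f(3) by auto
      then show ?thesis using xy_R[OF nN j(1)] by blast
    qed
    have "u \<in> R i"
      using step.IH
    proof
      assume h: "w \<in> Bs i \<and> reach (H i) (Fi i) u w"
      obtain j where j: "j \<in> {1..k}" "w = xs j \<or> w = ys j" using ring_end[OF True, of w] f(3) by auto
      have "w \<in> Bs j" using xy_in[OF j(1)] j(2) by auto
      then have "j = i" using in_Bs_same[of i j w] h i j by auto
      then have "w \<in> R i" using xy_R[OF nN i] j by auto
      then have "reach (H i) (Fi i) (xs i) w" using inR[OF nN i] by simp
      then have "reach (H i) (Fi i) (xs i) u" using h reach_sym reach_trans by metis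
      then show "u \<in> R i" using inR[OF nN i] u by simp
    next
      assume "u \<in> R i \<and> (\<exists>j\<in>{1..k}. w \<in> R j)" then show "u \<in> R i" by simp
    qed
    then show ?thesis using zR by blast
  next
    case False
    then obtain j e where je: "j \<in> {1..k}" "e \<in> BI j" "f = Some e" using f G_edges by auto
    have ee: "fst (gends C e) \<in> Bs j" "snd (gends C e) \<in> Bs j" using BI_ends[OF je(2)] by auto
    have wz: "w \<in> Bs j" "z \<in> Bs j" using f(3) ee je by auto
    have fi: "f \<in> Fi j" "f \<in> gedges (H j)" using je f unfolding H_edges by auto
    have rj: "reach (H j) (Fi j) w z" using f(3)
    proof
      assume "gends G f = (w, z)" then show ?thesis using reach_edge'[OF fi] je by simp
    next
      assume "gends G f = (z, w)" then show ?thesis using reach_edge'[OF fi] je reach_sym by fastforce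
    qed
    show ?thesis using step.IH
    proof
      assume h: "w \<in> Bs i \<and> reach (H i) (Fi i) u w"
      then have "j = i" using in_Bs_same[of i j w] i je wz by auto
      then show ?thesis using h rj wz by (auto intro: reach_trans)
    next
      assume h: "u \<in> R i \<and> (\<exists>j\<in>{1..k}. w \<in> R j)"
      then obtain j' where j': "j' \<in> {1..k}" "w \<in> R j'" by auto
      have "w \<in> Bs j'" using j' R_sub by auto
      then have "j' = j" using in_Bs_same[of j j' w] j' je wz by auto
      then have "reach (H j) (Fi j) (xs j) z" using j' inR[OF nN je(1)] rj reach_trans by metis
      then have "z \<in> R j" using inR[OF nN je(1)] wz by simp
      then show ?thesis using h je by blast
    qed
  qed
qed

lemma cls_inR:
  assumes nN: "None \<in> F" and i: "i \<in> {1..k}" and u: "u \<in> R i"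
  shows "cls G F u = Rstar"
proof (rule set_eqI, rule iffI)
  have ui: "u \<in> Bs i" using u R_sub by auto
  fix v assume "v \<in> cls G F u"
  then have r: "reach G F u v" and v: "v \<in> gverts G" unfolding cls_def by auto
  from reach_in[OF nN i ui r] show "v \<in> Rstar"
  proof
    assume h: "v \<in> Bs i \<and> reach (H i) (Fi i) u v"
    have "reach (H i) (Fi i) (xs i) u" using u inR[OF nN i] by simp
    then have "v \<in> R i" using h inR[OF nN i] reach_trans by metis
    then show ?thesis unfolding Rstar_def using i by blast
  next
    assume "u \<in> R i \<and> (\<exists>j\<in>{1..k}. v \<in> R j)" then show ?thesis unfolding Rstar_def by blast
  qed
next
  fix v assume "v \<in> Rstar"
  then obtain j where j: "j \<in> {1..k}" "v \<in> R j" unfolding Rstar_def by auto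
  have a: "reach G F (xs i) u" using u inR[OF nN i] reach_lift[OF nN i] by blast
  have b: "reach G F (xs j) v" using j inR[OF nN j(1)] reach_lift[OF nN j(1)] by blast
  have c: "reach G F (xs i) (xs j)" using ring_conn[OF nN i] ring_conn[OF nN j(1)] reach_sym reach_trans by metis
  have "reach G F u v" using a b c reach_sym reach_trans by metis
  moreover have "v \<in> gverts G" using j R_sub unfolding G_verts by blast
  ultimately show "v \<in> cls G F u" unfolding cls_def by simp
qed

lemma cls_notR:
  assumes nN: "None \<in> F" and i: "i \<in> {1..k}" and u: "u \<in> Bs i" "u \<notin> R i"
  shows "cls G F u = cl i u"
proof (rule set_eqI, rule iffI)
  fix v assume "v \<in> cls G F u"
  then have r: "reach G F u v" unfolding cls_def by auto
  then show "v \<in> cl i u" using reach_in[OF nN i u(1) r] u unfolding cls_def H_verts by auto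
next
  fix v assume v: "v \<in> cl i u"
  then have "reach G F u v" using reach_lift[OF nN i] unfolding cls_def by auto
  moreover have "v \<in> gverts G" using v cl_sub i unfolding G_verts by blast
  ultimately show "v \<in> cls G F u" unfolding cls_def by simp
qed


lemma cycles_in:
  assumes nN: "None \<in> F"
  shows "num_cycles G F + (k - 1) = (\<Sum>i\<in>{1..k}. num_cycles (H i) (Fi i))"
proof -
  let ?N = "\<lambda>i. {v\<in>Bs i. deg_in (H i) (Fi i) v \<noteq> 0}"
  have xN: "xs i \<in> ?N i" if i: "i \<in> {1..k}" for i
  proof -
    have "deg_in (H i) (Fi i) (xs i) \<noteq> 0"
      by (rule deg_nz[of "Fi i" None]) (use finF nN in \<open>auto simp: H_edges\<close>)
    then show ?thesis using xy_in[OF i] by auto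
  qed
  have aself: "a \<in> cl i a" if "a \<in> Bs i" for a i using cls_self[of a "H i"] that H_verts by auto
  have clN: "cl i ` ?N i = insert (R i) (cl i ` (?N i - R i))" and Rn: "R i \<notin> cl i ` (?N i - R i)"
    if i: "i \<in> {1..k}" for i
  proof -
    show "cl i ` ?N i = insert (R i) (cl i ` (?N i - R i))"
    proof (rule set_eqI, rule iffI)
      fix K assume "K \<in> cl i ` ?N i"
      then obtain a where a: "a \<in> ?N i" "K = cl i a" by auto
      show "K \<in> insert (R i) (cl i ` (?N i - R i))"
      proof (cases "a \<in> R i")
        case True
        then have "reach (H i) (Fi i) (xs i) a" using inR[OF nN i] by simp
        then have "cl i a = R i" unfolding R_def using cls_eq by metis
        then show ?thesis using a by simp
      next
        case False then show ?thesis using a by auto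
      qed
    next
      fix K assume K: "K \<in> insert (R i) (cl i ` (?N i - R i))"
      show "K \<in> cl i ` ?N i"
      proof (cases "K = R i")
        case True then show ?thesis using xN[OF i] unfolding R_def by auto
      next
        case False then show ?thesis using K by auto
      qed
    qed
    show "R i \<notin> cl i ` (?N i - R i)"
    proof
      assume "R i \<in> cl i ` (?N i - R i)"
      then obtain a where a: "a \<in> ?N i" "a \<notin> R i" "R i = cl i a" by auto
      then show False using aself[of a i] by auto
    qed
  qed
  have cardN: "card (cl i ` ?N i) = Suc (card (cl i ` (?N i - R i)))" if i: "i \<in> {1..k}" for i
    unfolding clN[OF i] using Rn[OF i] fin_cl_img[of "?N i - R i" i] i by (subst card_insert_disjoint) auto
  have Gimg: "cls G F ` (\<Union>i\<in>{1..k}. ?N i) = insert Rstar (\<Union>i\<in>{1..k}. cl i ` (?N i - R i))"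
  proof (rule set_eqI, rule iffI)
    fix K assume "K \<in> cls G F ` (\<Union>i\<in>{1..k}. ?N i)"
    then obtain i v where iv: "i \<in> {1..k}" "v \<in> ?N i" "K = cls G F v" by auto
    show "K \<in> insert Rstar (\<Union>i\<in>{1..k}. cl i ` (?N i - R i))"
    proof (cases "v \<in> R i")
      case True then show ?thesis using cls_inR[OF nN iv(1)] iv by simp
    next
      case False then show ?thesis using cls_notR[OF nN iv(1)] iv by auto
    qed
  next
    fix K assume K: "K \<in> insert Rstar (\<Union>i\<in>{1..k}. cl i ` (?N i - R i))"
    show "K \<in> cls G F ` (\<Union>i\<in>{1..k}. ?N i)"
    proof (cases "K = Rstar")
      case True
      have one: "(1::nat) \<in> {1..k}" using k2 by auto
      have "cls G F (xs 1) = Rstar" using cls_inR[OF nN one] xy_R[OF nN one] by simp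
      then show ?thesis using True xN[OF one] one by blast
    next
      case False
      then obtain i a where ia: "i \<in> {1..k}" "a \<in> ?N i" "a \<notin> R i" "K = cl i a" using K False by blast
      then have "K = cls G F a" using cls_notR[OF nN ia(1)] by auto
      then show ?thesis using ia by blast
    qed
  qed
  have Rs_notin: "Rstar \<notin> (\<Union>i\<in>{1..k}. cl i ` (?N i - R i))"
  proof
    assume "Rstar \<in> (\<Union>i\<in>{1..k}. cl i ` (?N i - R i))"
    then obtain i a where ia: "i \<in> {1..k}" "a \<in> ?N i" "a \<notin> R i" "Rstar = cl i a" by auto
    then have "a \<in> Rstar" using aself[of a i] by auto
    then obtain j where j: "j \<in> {1..k}" "a \<in> R j" unfolding Rstar_def by auto
    then have "a \<in> Bs j" using R_sub by auto
    then have "j = i" using in_Bs_same[of i j a] ia j by auto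
    then show False using ia j by simp
  qed
  have cU: "card (\<Union>i\<in>{1..k}. cl i ` (?N i - R i)) = (\<Sum>i\<in>{1..k}. card (cl i ` (?N i - R i)))"
  proof (rule card_UN_disj)
    fix i assume "i \<in> {1..k}" then show "finite (cl i ` (?N i - R i))" using fin_cl_img[of "?N i - R i" i] by auto
  next
    fix i j assume ij: "i \<in> {1..k}" "j \<in> {1..k}" "i \<noteq> j"
    show "cl i ` (?N i - R i) \<inter> cl j ` (?N j - R j) = {}"
    proof (rule ccontr)
      assume "cl i ` (?N i - R i) \<inter> cl j ` (?N j - R j) \<noteq> {}"
      then obtain a b where ab: "a \<in> ?N i" "b \<in> ?N j" "cl i a = cl j b" by auto
      have "a \<in> cl i a" using ab(1) aself by auto
      then have "a \<in> Bs j" using ab(3) cl_sub[of j] by auto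
      then show False using in_Bs_same[of i j a] ab(1) ij by auto
    qed
  qed simp
  have finU: "finite (\<Union>i\<in>{1..k}. cl i ` (?N i - R i))"
  proof (rule finite_UN_I)
    fix i assume "i \<in> {1..k}" then show "finite (cl i ` (?N i - R i))" using fin_cl_img[of "?N i - R i" i] by auto
  qed simp
  have "num_cycles G F = card (cls G F ` (\<Union>i\<in>{1..k}. ?N i))"
    using num_cycles_cls[OF wf_G FE] Ni by simp
  also have "\<dots> = Suc (\<Sum>i\<in>{1..k}. card (cl i ` (?N i - R i)))"
    unfolding Gimg using Rs_notin finU cU by (subst card_insert_disjoint) auto
  finally have A: "num_cycles G F = Suc (\<Sum>i\<in>{1..k}. card (cl i ` (?N i - R i)))" .
  have "(\<Sum>i\<in>{1..k}. num_cycles (H i) (Fi i)) = (\<Sum>i\<in>{1..k}. Suc (card (cl i ` (?N i - R i))))"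
    using ncH cardN by simp
  also have "\<dots> = k + (\<Sum>i\<in>{1..k}. card (cl i ` (?N i - R i)))"
    by (simp add: sum_Suc)
  finally show ?thesis using A k2 by simp
qed

lemma exc_decomp:
  "exc_cover G F + (if None \<in> F then 2 * (k - 1) else 0) = (\<Sum>i\<in>{1..k}. exc_cover (H i) (Fi i))"
proof (cases "None \<in> F")
  case True
  then show ?thesis using cycles_in[OF True] isolated unfolding exc_cover_def
    by (simp add: sum.distrib sum_distrib_left[symmetric])
next
  case False
  then show ?thesis using cycles_out[OF False] isolated unfolding exc_cover_def
    by (simp add: sum.distrib sum_distrib_left[symmetric])
qed


end

context chn3 begin

lemma Ring_BI: "Ring \<inter> Some ` BI i = {}"
proof -
  have "\<forall>j\<in>{1..k-1}. es j \<notin> BI i"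
  proof
    fix j assume j: "j \<in> {1..k-1}"
    show "es j \<notin> BI i"
    proof
      assume "es j \<in> BI i"
      then have "es j \<notin> es ` {0..k}" using BI_ends by blast
      then show False using j by auto
    qed
  qed
  then show ?thesis unfolding Ring_def by blast
qed

lemma Ring_G: "Ring \<subseteq> gedges G" using G_edges by auto
lemma H_G: "i \<in> {1..k} \<Longrightarrow> gedges (H i) \<subseteq> gedges G"
proof
  fix f assume i: "i \<in> {1..k}" and f: "f \<in> gedges (H i)"
  show "f \<in> gedges G"
  proof (cases f)
    case None then show ?thesis using Ring_G unfolding Ring_def by auto
  next
    case (Some e) then have "e \<in> BI i" using f H_edges by auto
    then show ?thesis using Some i G_edges by blast
  qed
qed

lemma build:
  assumes Fs: "\<forall>i\<in>{1..k}. even_cover (H i) (Fs i)" and b: "\<forall>i\<in>{1..k}. (None \<in> Fs i \<longleftrightarrow> bb)"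
  shows "even_cover G ((\<Union>i\<in>{1..k}. Fs i) \<union> (if bb then Ring else {})) \<and>
         (None \<in> (\<Union>i\<in>{1..k}. Fs i) \<union> (if bb then Ring else {}) \<longleftrightarrow> bb) \<and>
         (\<forall>i\<in>{1..k}. ((\<Union>i\<in>{1..k}. Fs i) \<union> (if bb then Ring else {})) \<inter> gedges (H i) = Fs i)"
proof -
  define F where "F = (\<Union>i\<in>{1..k}. Fs i) \<union> (if bb then Ring else {})"
  have FsE: "Fs i \<subseteq> insert None (Some ` BI i)" if "i \<in> {1..k}" for i
    using Fs that unfolding even_cover_def H_edges by auto
  have NR: "None \<in> Ring" unfolding Ring_def by simp
  have FE: "F \<subseteq> gedges G"
  proof -
    have "Fs i \<subseteq> gedges G" if "i \<in> {1..k}" for i using Fs H_G[OF that] that unfolding even_cover_def by blast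
    then show ?thesis unfolding F_def using Ring_G by (auto; blast)
  qed
  have Fi: "F \<inter> gedges (H i) = Fs i" if i: "i \<in> {1..k}" for i
  proof (rule set_eqI, rule iffI)
    fix f assume f: "f \<in> F \<inter> gedges (H i)"
    show "f \<in> Fs i"
    proof (cases f)
      case None
      then have "bb" using f b NR unfolding F_def by (auto split: if_splits)
      then show ?thesis using b i None by auto
    next
      case (Some e)
      then have eB: "e \<in> BI i" using f unfolding H_edges by auto
      from f have "f \<in> (\<Union>i\<in>{1..k}. Fs i) \<or> f \<in> Ring" unfolding F_def by (auto split: if_splits)
      then show ?thesis
      proof
        assume "f \<in> (\<Union>i\<in>{1..k}. Fs i)"
        then obtain j where j: "j \<in> {1..k}" "f \<in> Fs j" by auto
        then have "e \<in> BI j" using FsE[OF j(1)] Some by auto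
        then have "j = i" using BI_disj[of i j e] eB i j by auto
        then show ?thesis using j by simp
      next
        assume "f \<in> Ring" then show ?thesis using Ring_BI[of i] Some eB by auto
      qed
    qed
  next
    fix f assume "f \<in> Fs i"
    then show "f \<in> F \<inter> gedges (H i)" using i Fs unfolding F_def even_cover_def by auto
  qed
  have rc: "F \<inter> Ring = {} \<or> Ring \<subseteq> F"
  proof (cases bb)
    case True then show ?thesis unfolding F_def by auto
  next
    case False
    have "F \<inter> Ring = {}"
    proof (rule ccontr)
      assume "F \<inter> Ring \<noteq> {}"
      then obtain f j where fj: "j \<in> {1..k}" "f \<in> Fs j" "f \<in> Ring" using False unfolding F_def by (auto; blast)
      then have "f = None" using FsE[OF fj(1)] Ring_BI[of j] by auto
      then show False using fj b False by auto
    qed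
    then show ?thesis by simp
  qed
  have ecG: "even_cover G F" using ec_decomp[OF FE rc] Fi Fs by simp
  have "None \<in> F \<longleftrightarrow> bb" using b NR k2 unfolding F_def by (cases bb) auto
  then show ?thesis using ecG Fi unfolding F_def by simp
qed

lemma nverts: "n_verts G = (\<Sum>i\<in>{1..k}. n_verts (H i))"
proof -
  have "card (\<Union>i\<in>{1..k}. Bs i) = (\<Sum>i\<in>{1..k}. card (Bs i))"
  proof (rule card_UN_disj)
    fix i assume "i \<in> {1..k}" then show "finite (Bs i)" using wf_H unfolding wf_graph_def H_verts by auto
  next
    fix i j assume "i \<in> {1..k}" "j \<in> {1..k}" "i \<noteq> j"
    then show "Bs i \<inter> Bs j = {}" using in_Bs_same[of i j] by auto
  qed simp
  then show ?thesis unfolding n_verts_def G_verts H_verts by simp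
qed

lemma ntwo: "n_two G = (\<Sum>i\<in>{1..k}. n_two (H i))"
proof -
  have rc: "gedges G \<inter> Ring = {} \<or> Ring \<subseteq> gedges G" using Ring_G by simp
  have dg: "degree G v = degree (H i) v" if "i \<in> {1..k}" "v \<in> Bs i" for i v
  proof -
    have "gedges G \<inter> gedges (H i) = gedges (H i)" using H_G[OF that(1)] by auto
    then show ?thesis unfolding degree_def using deg_decomp[OF order_refl rc that] by simp
  qed
  have "{v\<in>gverts G. degree G v = 2} = (\<Union>i\<in>{1..k}. {v\<in>Bs i. degree (H i) v = 2})"
    unfolding G_verts using dg by auto
  moreover have "card (\<Union>i\<in>{1..k}. {v\<in>Bs i. degree (H i) v = 2}) = (\<Sum>i\<in>{1..k}. card {v\<in>Bs i. degree (H i) v = 2})"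
  proof (rule card_UN_disj)
    fix i assume "i \<in> {1..k}"
    then show "finite {v\<in>Bs i. degree (H i) v = 2}" using wf_H unfolding wf_graph_def H_verts by auto
  next
    fix i j assume "i \<in> {1..k}" "j \<in> {1..k}" "i \<noteq> j"
    then show "{v\<in>Bs i. degree (H i) v = 2} \<inter> {v\<in>Bs j. degree (H j) v = 2} = {}"
      using in_Bs_same[of i j] by auto
  qed simp
  ultimately show ?thesis unfolding n_two_def H_verts by simp
qed


lemma INF_decomp:
  assumes ne: "\<forall>i\<in>{1..k}. \<exists>F. even_cover (H i) F \<and> (None \<in> F \<longleftrightarrow> bb)"
  shows "\<exists>m. (\<forall>i\<in>{1..k}. (INF F\<in>{F. even_cover (H i) F \<and> (None \<in> F \<longleftrightarrow> bb)}. ereal (real (exc_cover (H i) F))) = ereal (real (m i)))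
          \<and> (INF F\<in>{F. even_cover G F \<and> (None \<in> F \<longleftrightarrow> bb)}. ereal (real (exc_cover G F)))
             = ereal ((\<Sum>i\<in>{1..k}. real (m i)) - (if bb then 2 * (real k - 1) else 0))"
proof -
  let ?S = "\<lambda>i. {F. even_cover (H i) F \<and> (None \<in> F \<longleftrightarrow> bb)}"
  have "\<forall>i\<in>{1..k}. \<exists>F0. F0 \<in> ?S i \<and> (\<forall>F\<in>?S i. exc_cover (H i) F0 \<le> exc_cover (H i) F)"
  proof
    fix i assume i: "i \<in> {1..k}"
    show "\<exists>F0. F0 \<in> ?S i \<and> (\<forall>F\<in>?S i. exc_cover (H i) F0 \<le> exc_cover (H i) F)"
    proof -
      have "\<exists>F. even_cover (H i) F \<and> (None \<in> F \<longleftrightarrow> bb)" using ne i by blast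
      then show ?thesis using min_cover[OF wf_H[OF i], of "\<lambda>F. None \<in> F \<longleftrightarrow> bb"] by simp
    qed
  qed
  from bchoice[OF this] obtain Fs where Fs: "\<forall>i\<in>{1..k}. Fs i \<in> ?S i \<and> (\<forall>F\<in>?S i. exc_cover (H i) (Fs i) \<le> exc_cover (H i) F)"
    by blast
  define m where "m i = exc_cover (H i) (Fs i)" for i
  have Hinf: "(INF F\<in>?S i. ereal (real (exc_cover (H i) F))) = ereal (real (m i))" if "i \<in> {1..k}" for i
    unfolding m_def using Fs that by (intro INF_min) auto
  define F where "F = (\<Union>i\<in>{1..k}. Fs i) \<union> (if bb then Ring else {})"
  have bF: "even_cover G F \<and> (None \<in> F \<longleftrightarrow> bb) \<and> (\<forall>i\<in>{1..k}. F \<inter> gedges (H i) = Fs i)"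
    unfolding F_def by (rule build) (use Fs in auto)
  let ?c = "(if bb then 2 * (k - 1) else 0)"
  have cv: "\<And>F'. even_cover G F' \<Longrightarrow> cov C k es Bs xs ys F'"
    unfolding cov_def cov_axioms_def using chn3_axioms by simp
  have eF: "exc_cover G F + ?c = (\<Sum>i\<in>{1..k}. m i)"
    using cov.exc_decomp[OF cv[of F]] bF unfolding m_def by simp
  have lb: "exc_cover G F \<le> exc_cover G F'" if F': "F' \<in> {F. even_cover G F \<and> (None \<in> F \<longleftrightarrow> bb)}" for F'
  proof -
    have e': "exc_cover G F' + ?c = (\<Sum>i\<in>{1..k}. exc_cover (H i) (F' \<inter> gedges (H i)))"
      using cov.exc_decomp[OF cv[of F']] F' by simp
    have "(\<Sum>i\<in>{1..k}. m i) \<le> (\<Sum>i\<in>{1..k}. exc_cover (H i) (F' \<inter> gedges (H i)))"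
    proof (rule sum_mono)
      fix i assume i: "i \<in> {1..k}"
      have "F' \<inter> gedges (H i) \<in> ?S i"
        using cov.ecH[OF cv[of F'] i] F' unfolding H_edges by auto
      then show "m i \<le> exc_cover (H i) (F' \<inter> gedges (H i))" using Fs i unfolding m_def by blast
    qed
    then show ?thesis using eF e' by linarith
  qed
  have Ginf: "(INF F\<in>{F. even_cover G F \<and> (None \<in> F \<longleftrightarrow> bb)}. ereal (real (exc_cover G F))) = ereal (real (exc_cover G F))"
    by (rule INF_min) (use bF lb in auto)
  have "real (exc_cover G F) = (\<Sum>i\<in>{1..k}. real (m i)) - (if bb then 2 * (real k - 1) else 0)"
  proof -
    have "real (exc_cover G F) + real ?c = (\<Sum>i\<in>{1..k}. real (m i))"
      using arg_cong[OF eF, of real] by simp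
    moreover have "real ?c = (if bb then 2 * (real k - 1) else 0)" using k2 by auto
    ultimately show ?thesis by linarith
  qed
  then show ?thesis using Hinf Ginf by auto
qed

lemma main2:
  assumes hyp: "\<forall>i\<in>{1..k}. delta (H i) None + delta_hat (H i) None \<le> 0"
  shows "\<exists>s. (\<forall>i\<in>{1..k}. delta (H i) None + delta_hat (H i) None = ereal (s i))
            \<and> delta G None + delta_hat G None = ereal (\<Sum>i\<in>{1..k}. s i)"
proof -
  have neT: "\<forall>i\<in>{1..k}. \<exists>F. even_cover (H i) F \<and> (None \<in> F \<longleftrightarrow> True)"
  proof
    fix i assume "i \<in> {1..k}"
    then show "\<exists>F. even_cover (H i) F \<and> (None \<in> F \<longleftrightarrow> True)" using hyp nonempty_with[of "H i" None] by auto
  qed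
  have neF: "\<forall>i\<in>{1..k}. \<exists>F. even_cover (H i) F \<and> (None \<in> F \<longleftrightarrow> False)"
  proof
    fix i assume "i \<in> {1..k}"
    then show "\<exists>F. even_cover (H i) F \<and> (None \<in> F \<longleftrightarrow> False)" using hyp nonempty_without[of "H i" None] by auto
  qed
  obtain m where m: "\<forall>i\<in>{1..k}. (INF F\<in>{F. even_cover (H i) F \<and> (None \<in> F \<longleftrightarrow> True)}. ereal (real (exc_cover (H i) F))) = ereal (real (m i))"
    "(INF F\<in>{F. even_cover G F \<and> (None \<in> F \<longleftrightarrow> True)}. ereal (real (exc_cover G F)))
             = ereal ((\<Sum>i\<in>{1..k}. real (m i)) - (if True then 2 * (real k - 1) else 0))"
    using INF_decomp[OF neT] by blast
  obtain m' where m': "\<forall>i\<in>{1..k}. (INF F\<in>{F. even_cover (H i) F \<and> (None \<in> F \<longleftrightarrow> False)}. ereal (real (exc_cover (H i) F))) = ereal (real (m' i))"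
    "(INF F\<in>{F. even_cover G F \<and> (None \<in> F \<longleftrightarrow> False)}. ereal (real (exc_cover G F)))
             = ereal ((\<Sum>i\<in>{1..k}. real (m' i)) - (if False then 2 * (real k - 1) else 0))"
    using INF_decomp[OF neF] by blast
  define qH where "qH i = (real (n_verts (H i)) + real (n_two (H i))) / 4" for i
  define qG where "qG = (real (n_verts G) + real (n_two G)) / 4"
  have qGs: "qG = (\<Sum>i\<in>{1..k}. qH i)"
    unfolding qG_def qH_def nverts ntwo by (simp add: sum.distrib sum_divide_distrib[symmetric])
  define s where "s i = real (m i) - 2 - qH i + (real (m' i) - qH i)" for i
  have Hs: "delta (H i) None + delta_hat (H i) None = ereal (s i)" if i: "i \<in> {1..k}" for i
  proof -
    have "exc_with (H i) None = ereal (real (m i)) - 2" using m(1) i unfolding exc_with_def by simp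
    moreover have "exc_without (H i) None = ereal (real (m' i))" using m'(1) i unfolding exc_without_def by simp
    ultimately show ?thesis unfolding delta_def delta_hat_def s_def qH_def[symmetric] by simp
  qed
  have "exc_with G None = ereal ((\<Sum>i\<in>{1..k}. real (m i)) - 2 * (real k - 1)) - 2" using m(2) unfolding exc_with_def by simp
  moreover have "exc_without G None = ereal (\<Sum>i\<in>{1..k}. real (m' i))" using m'(2) unfolding exc_without_def by simp
  ultimately have "delta G None + delta_hat G None
     = ereal ((\<Sum>i\<in>{1..k}. real (m i)) - 2 * (real k - 1) - 2 - qG + ((\<Sum>i\<in>{1..k}. real (m' i)) - qG))"
    unfolding delta_def delta_hat_def qG_def[symmetric] by simp
  also have "\<dots> = ereal (\<Sum>i\<in>{1..k}. s i)"
    unfolding qGs s_def using k2 by (simp add: sum.distrib sum_subtractf sum_distrib_left sum_negf)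
  finally show ?thesis using Hs by blast
qed

end

context chn2 begin

lemma k1_eq: "k = 1 \<Longrightarrow> G = H 1"
proof -
  assume k: "k = 1"
  have v: "gverts G = gverts (H 1)" using G_verts k H_verts by simp
  have e: "gedges G = gedges (H 1)" using G_edges k H_edges unfolding Ring_def by auto
  have g: "gends G = gends (H 1)"
  proof
    fix f show "gends G f = gends (H 1) f" using k unfolding chain_closure_def chain_block_def by (cases f) simp_all
  qed
  show ?thesis using v e g by (intro mgraph.equality) simp_all
qed

end

theorem proposition2p3:
  fixes C :: "('v, 'e) mgraph" and k :: nat and es :: "nat \<Rightarrow> 'e"
    and Bs :: "nat \<Rightarrow> 'v set" and xs ys :: "nat \<Rightarrow> 'v"
  assumes "subcubic_chain C k es Bs xs ys"
    and "\<forall>i\<in>{1..k}. delta (chain_block C k es Bs xs ys i) None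
                     + delta_hat (chain_block C k es Bs xs ys i) None \<le> 0"
  shows "closure_sum C k xs ys \<le> 0 \<and>
         (closure_sum C k xs ys = 0 \<longleftrightarrow>
            (\<forall>i\<in>{1..k}. delta (chain_block C k es Bs xs ys i) None
                        + delta_hat (chain_block C k es Bs xs ys i) None = 0))"
proof -
  let ?D = "\<lambda>i. delta (chain_block C k es Bs xs ys i) None + delta_hat (chain_block C k es Bs xs ys i) None"
  have c1: "chn C k es Bs xs ys" unfolding chn_def using assms(1) by simp
  consider "k = 0" | "k = 1" | "2 \<le> k" by linarith
  then show ?thesis
  proof cases
    case 1
    then show ?thesis unfolding closure_sum_def by simp
  next
    case 2
    have c2: "chn2 C k es Bs xs ys" unfolding chn2_def chn2_axioms_def using c1 2 by simp
    have eq: "chain_closure C k xs ys = chain_block C k es Bs xs ys 1" using chn2.k1_eq[OF c2 2] .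
    have cs: "closure_sum C k xs ys = ?D 1" unfolding closure_sum_def using 2 eq by simp
    have k1s: "{1..k} = {1}" using 2 by simp
    have d: "?D 1 \<le> 0" using assms(2) k1s by blast
    show ?thesis unfolding cs k1s using d by blast
  next
    case 3
    have c3: "chn3 C k es Bs xs ys" unfolding chn3_def chn3_axioms_def chn2_def chn2_axioms_def using c1 3 by simp
    obtain s where s: "\<forall>i\<in>{1..k}. ?D i = ereal (s i)"
      "delta (chain_closure C k xs ys) None + delta_hat (chain_closure C k xs ys) None = ereal (\<Sum>i\<in>{1..k}. s i)"
      using chn3.main2[OF c3 assms(2)] by blast
    have cs: "closure_sum C k xs ys = ereal (\<Sum>i\<in>{1..k}. s i)" unfolding closure_sum_def using 3 s(2) by simp
    have sn: "\<forall>i\<in>{1..k}. s i \<le> 0" using s(1) assms(2) by fastforce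
    have le: "(\<Sum>i\<in>{1..k}. s i) \<le> 0" using sn by (intro sum_nonpos) auto
    have "(\<Sum>i\<in>{1..k}. s i) = 0 \<longleftrightarrow> (\<forall>i\<in>{1..k}. s i = 0)"
    proof -
      have "(\<Sum>i\<in>{1..k}. - s i) = 0 \<longleftrightarrow> (\<forall>i\<in>{1..k}. - s i = 0)"
        using sn by (intro sum_nonneg_eq_0_iff) auto
      then show ?thesis by (simp add: sum_negf)
    qed
    moreover have "(\<forall>i\<in>{1..k}. s i = 0) \<longleftrightarrow> (\<forall>i\<in>{1..k}. ?D i = 0)" using s(1) by auto
    ultimately show ?thesis using cs le by simp
  qed
qed

end
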